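(* For fixed $h\in\mathcal H_3$ and $y\in\mathbb Z_+^r$, the function $f_h(\cdot,y):\mathbb R^d\to\mathbb R$ is of class $C^3$ and satisfies $|f_h(\cdot,y)|_{\rm Lip}\le1$, $|f_h(\cdot,y)|_2\le\frac12$, $|f_h(\cdot,y)|_3\le\frac13$. If moreover $h(\cdot,y')$ is constant on $\mathbb R^d$ for every $y'\in\mathbb Z_+^r$, then $|f_h(\cdot,y)|_{\rm Lip}=|f_h(\cdot,y)|_2=|f_h(\cdot,y)|_3=0$.
   Context: Fix positive semidefinite $\Sigma\in\mathbb R^{d\times d}$ and $\lambda\in(0,\infty)^r$; $Z\sim\mathcal N_d(0,\Sigma)$, $N\sim\prod_j\mathrm{Po}(\lambda_j)$ independent. For $g\in C^3_b(\mathbb R^d)$: $|g|_k=\max_{j_1\le\dots\le j_k}\sup|\partial_{j_1\cdots j_k}g|$, $|g|_{\rm Lip}$ the Lipschitz constant. $\mathcal C_3=\{g:|g|_{\rm Lip}\vee|g|_2\vee|g|_3\le1\}$, $\mathcal H_3=\{h:\mathbb R^d\times\mathbb Z_+^r\to\mathbb R:\sup|h|\le1,\ h(\cdot,y)\in\mathcal C_3\ \forall y\}$. $S_sh(x,y)=\mathbb Eh(\sqrt{1-s}x+\sqrt sZ,y)$, $p_s(y,z)=\prod_j\sum_{k=0}^{y_j\wedge z_j}\binom{y_j}k(1-s)^ks^{y_j-k}(\lambda_js)^{z_j-k}e^{-\lambda_js}/(z_j-k)!$, $T_sh(x,y)=\sum_zS_sh(x,z)p_s(y,z)$, $f_h(x,y)=-\int_0^1\frac{1}{2(1-s)}[T_sh(x,y)-\mathbb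 Eh(Z,N)]ds$. *)

theory Defs
  imports "HOL-Probability.Probability"
begin

definition pd :: "'n::finite \<Rightarrow> (real^'n \<Rightarrow> real) \<Rightarrow> real^'n \<Rightarrow> real" where
  "pd j g x = deriv (\<lambda>t. g (x + t *\<^sub>R axis j 1)) 0"

definition has_pd :: "'n::finite \<Rightarrow> (real^'n \<Rightarrow> real) \<Rightarrow> bool" where
  "has_pd j g \<longleftrightarrow> (\<forall>x. (\<lambda>t. g (x + t *\<^sub>R axis j 1)) differentiable (at 0))"

definition C3 :: "(real^'n::finite \<Rightarrow> real) \<Rightarrow> bool" where
  "C3 g \<longleftrightarrow> continuous_on UNIV g
     \<and> (\<forall>j. has_pd j g \<and> continuous_on UNIV (pd j g))
     \<and> (\<forall>j k. has_pd k (pd j g) \<and> continuous_on UNIV (pd k (pd j g)))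
     \<and> (\<forall>j k l. has_pd l (pd k (pd j g)) \<and> continuous_on UNIV (pd l (pd k (pd j g))))"

definition snorm2 :: "(real^'n::finite \<Rightarrow> real) \<Rightarrow> ereal" where
  "snorm2 g = (SUP (x, j, k) \<in> UNIV. ereal \<bar>pd k (pd j g) x\<bar>)"

definition snorm3 :: "(real^'n::finite \<Rightarrow> real) \<Rightarrow> ereal" where
  "snorm3 g = (SUP (x, j, k, l) \<in> UNIV. ereal \<bar>pd l (pd k (pd j g)) x\<bar>)"

definition lip_const :: "(real^'n::finite \<Rightarrow> real) \<Rightarrow> ereal" where
  "lip_const g = (SUP (x, y) \<in> {(x, y). x \<noteq> y}. ereal (\<bar>g x - g y\<bar> / dist x y))"

definition cls_C3 :: "(real^'n::finite \<Rightarrow> real) \<Rightarrow> bool" where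
  "cls_C3 g \<longleftrightarrow> C3 g \<and> bounded (range g) \<and>
     lip_const g \<le> 1 \<and> snorm2 g \<le> 1 \<and> snorm3 g \<le> 1"

definition cls_H3 :: "(real^'n::finite \<Rightarrow> ('m::finite \<Rightarrow> nat) \<Rightarrow> real) \<Rightarrow> bool" where
  "cls_H3 h \<longleftrightarrow> (\<forall>x y. \<bar>h x y\<bar> \<le> 1) \<and> (\<forall>y. cls_C3 (\<lambda>x. h x y))"

definition psd :: "real^'n^'n \<Rightarrow> bool" where
  "psd S \<longleftrightarrow> transpose S = S \<and> (\<forall>v. 0 \<le> v \<bullet> (S *v v))"

text \<open>Standard Gaussian measure on R^d, and N_d(0,Sigma) as the law of A W with A A^T = Sigma.\<close>
definition std_gauss :: "(real^'n::finite) measure" where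
  "std_gauss = density lborel (\<lambda>w. ennreal (\<Prod>i\<in>UNIV. std_normal_density (w $ i)))"

definition sqrt_mat :: "real^'n^'n \<Rightarrow> real^'n^'n" where
  "sqrt_mat S = (SOME A. A ** transpose A = S)"

definition gauss :: "real^'n::finite^'n \<Rightarrow> (real^'n) measure" where
  "gauss S = distr std_gauss borel (\<lambda>w. sqrt_mat S *v w)"

definition poisson_prod :: "('m::finite \<Rightarrow> real) \<Rightarrow> ('m \<Rightarrow> nat) \<Rightarrow> real" where
  "poisson_prod lam z = (\<Prod>j\<in>UNIV. exp (- lam j) * lam j ^ z j / fact (z j))"

definition Eh :: "real^'n::finite^'n \<Rightarrow> ('m::finite \<Rightarrow> real) \<Rightarrow>
    (real^'n \<Rightarrow> ('m \<Rightarrow> nat) \<Rightarrow> real) \<Rightarrow> real" where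
  "Eh S lam h = (\<Sum>\<^sub>\<infinity> z. poisson_prod lam z * (\<integral> u. h u z \<partial>gauss S))"

definition S_op :: "real^'n::finite^'n \<Rightarrow> real \<Rightarrow>
    (real^'n \<Rightarrow> ('m \<Rightarrow> nat) \<Rightarrow> real) \<Rightarrow> real^'n \<Rightarrow> ('m \<Rightarrow> nat) \<Rightarrow> real" where
  "S_op S s h x y = (\<integral> u. h (sqrt (1 - s) *\<^sub>R x + sqrt s *\<^sub>R u) y \<partial>gauss S)"

definition p_s :: "('m::finite \<Rightarrow> real) \<Rightarrow> real \<Rightarrow> ('m \<Rightarrow> nat) \<Rightarrow> ('m \<Rightarrow> nat) \<Rightarrow> real" where
  "p_s lam s y z = (\<Prod>j\<in>UNIV. \<Sum>k = 0..min (y j) (z j).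
      real (y j choose k) * (1 - s) ^ k * s ^ (y j - k) * (lam j * s) ^ (z j - k)
      * exp (- lam j * s) / fact (z j - k))"

definition T_op :: "real^'n::finite^'n \<Rightarrow> ('m::finite \<Rightarrow> real) \<Rightarrow> real \<Rightarrow>
    (real^'n \<Rightarrow> ('m \<Rightarrow> nat) \<Rightarrow> real) \<Rightarrow> real^'n \<Rightarrow> ('m \<Rightarrow> nat) \<Rightarrow> real" where
  "T_op S lam s h x y = (\<Sum>\<^sub>\<infinity> z. S_op S s h x z * p_s lam s y z)"

definition f_sol :: "real^'n::finite^'n \<Rightarrow> ('m::finite \<Rightarrow> real) \<Rightarrow>
    (real^'n \<Rightarrow> ('m \<Rightarrow> nat) \<Rightarrow> real) \<Rightarrow> real^'n \<Rightarrow> ('m \<Rightarrow> nat) \<Rightarrow> real" where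
  "f_sol S lam h x y = - (LBINT s:{0..1}. 1 / (2 * (1 - s)) * (T_op S lam s h x y - Eh S lam h))"

end

theory Submission
  imports Defs
begin

lemma MVT_bound:
  fixes f f' :: "real \<Rightarrow> real"
  assumes D: "\<And>t. (f has_real_derivative f' t) (at t)" and bd: "\<And>t. \<bar>f' t\<bar> \<le> B"
  shows "\<bar>f b - f a\<bar> \<le> B * \<bar>b - a\<bar>"
proof -
  have B0: "0 \<le> B" using bd[of 0] by simp
  have *: "\<bar>f v - f u\<bar> \<le> B * (v - u)" if "u < v" for u v
  proof -
    have "\<exists>z. u < z \<and> z < v \<and> f v - f u = (v - u) * f' z" by (rule MVT2[OF that]) (rule D)
    then obtain z where "f v - f u = (v - u) * f' z" by blast
    then have "\<bar>f v - f u\<bar> = (v - u) * \<bar>f' z\<bar>" using that by (simp add: abs_mult)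
    also have "\<dots> \<le> (v - u) * B" using that bd[of z] by (intro mult_left_mono) auto
    finally show ?thesis by (simp add: mult.commute)
  qed
  consider "a < b" | "b < a" | "a = b" by linarith
  then show ?thesis
  proof cases
    case 1 then show ?thesis using *[OF 1] by simp
  next
    case 2 then show ?thesis using *[OF 2] by (simp add: abs_minus_commute)
  qed simp
qed

lemma DERIV_integral:
  fixes F F' :: "'a \<Rightarrow> real \<Rightarrow> real" and B :: "'a \<Rightarrow> real"
  assumes D: "\<And>\<omega> t. \<omega> \<in> space M \<Longrightarrow> (F \<omega> has_real_derivative F' \<omega> t) (at t)"
    and mF: "\<And>t. (\<lambda>\<omega>. F \<omega> t) \<in> borel_measurable M"
    and mF': "(\<lambda>\<omega>. F' \<omega> 0) \<in> borel_measurable M"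
    and i0: "integrable M (\<lambda>\<omega>. F \<omega> 0)"
    and iB: "integrable M B"
    and bd: "\<And>\<omega> t. \<omega> \<in> space M \<Longrightarrow> \<bar>F' \<omega> t\<bar> \<le> B \<omega>"
  shows "integrable M (\<lambda>\<omega>. F \<omega> t)"
    and "((\<lambda>t. \<integral>\<omega>. F \<omega> t \<partial>M) has_real_derivative (\<integral>\<omega>. F' \<omega> 0 \<partial>M)) (at 0)"
proof -
  have mv: "\<bar>F \<omega> b - F \<omega> a\<bar> \<le> B \<omega> * \<bar>b - a\<bar>" if "\<omega> \<in> space M" for \<omega> a b
    using MVT_bound[of "F \<omega>" "F' \<omega>" "B \<omega>", OF D bd] that by blast
  have B0: "0 \<le> B \<omega>" if "\<omega> \<in> space M" for \<omega> using bd[OF that, of 0] by simp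
  have int: "integrable M (\<lambda>\<omega>. F \<omega> t)" for t
  proof (rule Bochner_Integration.integrable_bound[of _ "\<lambda>\<omega>. \<bar>F \<omega> 0\<bar> + B \<omega> * \<bar>t\<bar>"])
    show "integrable M (\<lambda>\<omega>. \<bar>F \<omega> 0\<bar> + B \<omega> * \<bar>t\<bar>)"
      using i0 iB by (intro Bochner_Integration.integrable_add integrable_abs integrable_mult_left)
    show "AE \<omega> in M. norm (F \<omega> t) \<le> norm (\<bar>F \<omega> 0\<bar> + B \<omega> * \<bar>t\<bar>)"
    proof (rule AE_I2)
      fix \<omega> assume w: "\<omega> \<in> space M"
      have "\<bar>F \<omega> t\<bar> \<le> \<bar>F \<omega> 0\<bar> + B \<omega> * \<bar>t\<bar>" using mv[OF w, of t 0] by simp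
      then show "norm (F \<omega> t) \<le> norm (\<bar>F \<omega> 0\<bar> + B \<omega> * \<bar>t\<bar>)" using B0[OF w] by simp
    qed
  qed (use mF in auto)
  then show "integrable M (\<lambda>\<omega>. F \<omega> t)" .
  show "((\<lambda>t. \<integral>\<omega>. F \<omega> t \<partial>M) has_real_derivative (\<integral>\<omega>. F' \<omega> 0 \<partial>M)) (at 0)"
    unfolding DERIV_def
  proof (subst tendsto_at_iff_sequentially, intro allI impI)
    fix X :: "nat \<Rightarrow> real" assume X: "\<forall>i. X i \<in> UNIV - {0}" and X0: "X \<longlonglongrightarrow> 0"
    have eq: "((\<lambda>h. ((\<integral>\<omega>. F \<omega> (0 + h) \<partial>M) - (\<integral>\<omega>. F \<omega> 0 \<partial>M)) / h) \<circ> X) i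
        = (\<integral>\<omega>. (F \<omega> (X i) - F \<omega> 0) / X i \<partial>M)" for i
      using int by (simp add: Bochner_Integration.integral_diff)
    show "((\<lambda>h. ((\<integral>\<omega>. F \<omega> (0 + h) \<partial>M) - (\<integral>\<omega>. F \<omega> 0 \<partial>M)) / h) \<circ> X) \<longlonglongrightarrow> (\<integral>\<omega>. F' \<omega> 0 \<partial>M)"
      unfolding eq
    proof (rule integral_dominated_convergence[where w=B])
      show "(\<lambda>\<omega>. F' \<omega> 0) \<in> borel_measurable M" by (rule mF')
      show "(\<lambda>\<omega>. (F \<omega> (X i) - F \<omega> 0) / X i) \<in> borel_measurable M" for i
        using mF by measurable
      show "integrable M B" by (rule iB)
      show "AE \<omega> in M. (\<lambda>i. (F \<omega> (X i) - F \<omega> 0) / X i) \<longlonglongrightarrow> F' \<omega> 0"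
      proof (rule AE_I2)
        fix \<omega> assume w: "\<omega> \<in> space M"
        have "((\<lambda>h. (F \<omega> (0 + h) - F \<omega> 0) / h) \<longlongrightarrow> F' \<omega> 0) (at 0)"
          using D[OF w, of 0] unfolding DERIV_def .
        then have "((\<lambda>h. (F \<omega> (0 + h) - F \<omega> 0) / h) \<circ> X) \<longlonglongrightarrow> F' \<omega> 0"
          using X X0 by (subst (asm) tendsto_at_iff_sequentially) blast
        then show "(\<lambda>i. (F \<omega> (X i) - F \<omega> 0) / X i) \<longlonglongrightarrow> F' \<omega> 0" by (simp add: o_def)
      qed
      show "AE \<omega> in M. norm ((F \<omega> (X i) - F \<omega> 0) / X i) \<le> B \<omega>" for i
      proof (rule AE_I2)
        fix \<omega> assume w: "\<omega> \<in> space M"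
        have "X i \<noteq> 0" using X by auto
        then show "norm ((F \<omega> (X i) - F \<omega> 0) / X i) \<le> B \<omega>"
          using mv[OF w, of "X i" 0] by (simp add: divide_le_eq)
      qed
    qed
  qed
qed

lemma continuous_integral:
  fixes F :: "'a \<Rightarrow> 'b::metric_space \<Rightarrow> real" and B :: "'a \<Rightarrow> real"
  assumes C: "\<And>\<omega>. \<omega> \<in> space M \<Longrightarrow> continuous_on UNIV (F \<omega>)"
    and mF: "\<And>x. (\<lambda>\<omega>. F \<omega> x) \<in> borel_measurable M"
    and iB: "integrable M B"
    and bd: "\<And>\<omega> x. \<omega> \<in> space M \<Longrightarrow> \<bar>F \<omega> x\<bar> \<le> B \<omega>"
  shows "continuous_on UNIV (\<lambda>x. \<integral>\<omega>. F \<omega> x \<partial>M)"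
proof (rule continuous_on_sequentiallyI)
  fix u :: "nat \<Rightarrow> 'b" and a assume u: "u \<longlonglongrightarrow> a"
  show "(\<lambda>n. \<integral>\<omega>. F \<omega> (u n) \<partial>M) \<longlonglongrightarrow> (\<integral>\<omega>. F \<omega> a \<partial>M)"
  proof (rule integral_dominated_convergence[where w=B])
    show "AE \<omega> in M. (\<lambda>i. F \<omega> (u i)) \<longlonglongrightarrow> F \<omega> a"
    proof (rule AE_I2)
      fix \<omega> assume w: "\<omega> \<in> space M"
      show "(\<lambda>i. F \<omega> (u i)) \<longlonglongrightarrow> F \<omega> a"
        using C[OF w] u unfolding continuous_on_sequentially by (auto simp: o_def)
    qed
  qed (use mF iB bd in auto)
qed

lemma DERIV_line_shift:
  fixes \<phi> :: "'a::real_normed_vector \<Rightarrow> real"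
  assumes "\<And>x. ((\<lambda>t. \<phi> (x + t *\<^sub>R v)) has_real_derivative \<psi> x) (at 0)"
  shows "((\<lambda>t. \<phi> (x + t *\<^sub>R v)) has_real_derivative \<psi> (x + t0 *\<^sub>R v)) (at t0)"
proof -
  have "((\<lambda>t. \<phi> ((x + t0 *\<^sub>R v) + t *\<^sub>R v)) has_real_derivative \<psi> (x + t0 *\<^sub>R v)) (at 0)"
    by (rule assms)
  moreover have "(\<lambda>t. \<phi> ((x + t0 *\<^sub>R v) + t *\<^sub>R v)) = (\<lambda>t. (\<lambda>t. \<phi> (x + t *\<^sub>R v)) (t + t0))"
    by (auto simp: algebra_simps)
  ultimately have "((\<lambda>t. (\<lambda>t. \<phi> (x + t *\<^sub>R v)) (t + t0)) has_real_derivative \<psi> (x + t0 *\<^sub>R v)) (at 0)"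
    by simp
  then show ?thesis using DERIV_shift[of "\<lambda>t. \<phi> (x + t *\<^sub>R v)" "\<psi> (x + t0 *\<^sub>R v)" 0 t0] by simp
qed

lemma pd_DERIV0:
  assumes "has_pd j g"
  shows "((\<lambda>t. g (x + t *\<^sub>R axis j 1)) has_real_derivative pd j g x) (at 0)"
  using assms unfolding has_pd_def pd_def
  by (simp add: DERIV_deriv_iff_real_differentiable)

lemma pd_DERIV:
  assumes "has_pd j g"
  shows "((\<lambda>t. g (x + t *\<^sub>R axis j 1)) has_real_derivative pd j g (x + t0 *\<^sub>R axis j 1)) (at t0)"
  by (rule DERIV_line_shift, rule pd_DERIV0[OF assms])

lemma has_pd_from_DERIV:
  assumes "\<And>x. ((\<lambda>t. g (x + t *\<^sub>R axis j 1)) has_real_derivative G x) (at 0)"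
  shows "has_pd j g" "pd j g = G"
  using assms unfolding has_pd_def pd_def
  by (auto simp: real_differentiable_def DERIV_imp_deriv intro!: ext)

lemma pd_scaled_DERIV:
  assumes "has_pd j g"
  shows "((\<lambda>t. g (w + (a * t) *\<^sub>R axis j 1)) has_real_derivative a * pd j g (w + (a * t0) *\<^sub>R axis j 1)) (at t0)"
proof -
  have d1: "((\<lambda>t. g (w + t *\<^sub>R axis j 1)) has_real_derivative pd j g (w + (a * t0) *\<^sub>R axis j 1)) (at (a * t0))"
    by (rule pd_DERIV[OF assms])
  have d2: "((\<lambda>t. a * t) has_real_derivative a) (at t0)"
    using DERIV_cmult_Id[of a t0] .
  have "((\<lambda>t. g (w + (a * t) *\<^sub>R axis j 1)) has_real_derivative pd j g (w + (a * t0) *\<^sub>R axis j 1) * a) (at t0)"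
    using DERIV_chain2[OF d1 d2] .
  then show ?thesis by (simp add: mult.commute)
qed

lemma dist_line: "dist (x + t *\<^sub>R axis j (1::real)) x = \<bar>t\<bar>"
  by (simp add: dist_norm)

lemma pd_lip_bound:
  assumes "has_pd j g" and L: "\<And>x x'. \<bar>g x - g x'\<bar> \<le> L * dist x x'"
  shows "\<bar>pd j g x\<bar> \<le> L"
proof -
  have D: "((\<lambda>h. (g (x + (0 + h) *\<^sub>R axis j 1) - g (x + 0 *\<^sub>R axis j 1)) / h) \<longlongrightarrow> pd j g x) (at 0)"
    using pd_DERIV0[OF assms(1), of x] unfolding DERIV_def .
  have "((\<lambda>h. \<bar>(g (x + (0 + h) *\<^sub>R axis j 1) - g (x + 0 *\<^sub>R axis j 1)) / h\<bar>) \<longlongrightarrow> \<bar>pd j g x\<bar>) (at 0)"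
    by (rule tendsto_rabs[OF D])
  moreover have "eventually (\<lambda>h. \<bar>(g (x + (0 + h) *\<^sub>R axis j 1) - g (x + 0 *\<^sub>R axis j 1)) / h\<bar> \<le> L) (at (0::real))"
  proof (rule eventually_at_topological[THEN iffD2], intro exI[of _ UNIV] conjI ballI impI)
    fix h :: real assume "h \<noteq> 0"
    have "\<bar>g (x + h *\<^sub>R axis j 1) - g x\<bar> \<le> L * \<bar>h\<bar>" using L[of "x + h *\<^sub>R axis j 1" x] by (simp add: dist_line)
    then show "\<bar>(g (x + (0 + h) *\<^sub>R axis j 1) - g (x + 0 *\<^sub>R axis j 1)) / h\<bar> \<le> L"
      using \<open>h \<noteq> 0\<close> by (simp add: abs_divide divide_le_eq)
  qed auto
  ultimately show ?thesis by (rule tendsto_upperbound) simp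
qed

lemma lip_const_le1:
  assumes "lip_const g \<le> 1"
  shows "\<bar>g x - g x'\<bar> \<le> 1 * dist x x'"
proof (cases "x = x'")
  case False
  then have "ereal (\<bar>g x - g x'\<bar> / dist x x') \<le> 1"
    using assms unfolding lip_const_def by (auto simp: SUP_le_iff)
  then show ?thesis using False by (simp add: divide_le_eq)
qed simp

lemma snorm2_le:
  assumes "snorm2 g \<le> 1" shows "\<bar>pd k (pd j g) x\<bar> \<le> 1"
  using assms unfolding snorm2_def by (auto simp: SUP_le_iff)

lemma snorm3_le:
  assumes "snorm3 g \<le> 1" shows "\<bar>pd l (pd k (pd j g)) x\<bar> \<le> 1"
  using assms unfolding snorm3_def by (auto simp: SUP_le_iff)

lemma line_DERIV_integral:
  fixes F F' :: "'a \<Rightarrow> 'b::real_normed_vector \<Rightarrow> real" and B :: "'a \<Rightarrow> real"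
  assumes D: "\<And>\<omega> x. \<omega> \<in> space M \<Longrightarrow> ((\<lambda>t. F \<omega> (x + t *\<^sub>R v)) has_real_derivative F' \<omega> x) (at 0)"
    and mF: "\<And>x. (\<lambda>\<omega>. F \<omega> x) \<in> borel_measurable M"
    and mF': "\<And>x. (\<lambda>\<omega>. F' \<omega> x) \<in> borel_measurable M"
    and i0: "\<And>x. integrable M (\<lambda>\<omega>. F \<omega> x)"
    and iB: "integrable M B"
    and bd: "\<And>\<omega> x. \<omega> \<in> space M \<Longrightarrow> \<bar>F' \<omega> x\<bar> \<le> B \<omega>"
  shows "((\<lambda>t. \<integral>\<omega>. F \<omega> (x + t *\<^sub>R v) \<partial>M) has_real_derivative (\<integral>\<omega>. F' \<omega> x \<partial>M)) (at 0)"
proof -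
  have "((\<lambda>t. \<integral>\<omega>. F \<omega> (x + t *\<^sub>R v) \<partial>M) has_real_derivative (\<integral>\<omega>. F' \<omega> (x + 0 *\<^sub>R v) \<partial>M)) (at 0)"
  proof (rule DERIV_integral(2)[where B=B])
    show "((\<lambda>t. F \<omega> (x + t *\<^sub>R v)) has_real_derivative F' \<omega> (x + t *\<^sub>R v)) (at t)" if "\<omega> \<in> space M" for \<omega> t
      by (rule DERIV_line_shift[where \<phi>="F \<omega>"], rule D[OF that])
  qed (use mF mF' i0 iB bd in auto)
  then show ?thesis by simp
qed

definition qk :: "real \<Rightarrow> real \<Rightarrow> nat \<Rightarrow> nat \<Rightarrow> real" where
  "qk l s m n = (\<Sum>k = 0..min m n. real (m choose k) * (1 - s) ^ k * s ^ (m - k) * (l * s) ^ (n - k)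
      * exp (- l * s) / fact (n - k))"

lemma p_s_eq: "p_s lam s y z = (\<Prod>j\<in>UNIV. qk (lam j) s (y j) (z j))"
  by (simp add: p_s_def qk_def)

lemma qk_nonneg: "0 \<le> l \<Longrightarrow> 0 \<le> s \<Longrightarrow> s \<le> 1 \<Longrightarrow> 0 \<le> qk l s m n"
  unfolding qk_def by (auto intro!: sum_nonneg divide_nonneg_nonneg mult_nonneg_nonneg)

lemma qk_sums:
  assumes l: "0 \<le> l" and s: "0 \<le> s" "s \<le> 1"
  shows "qk l s m sums 1"
proof -
  define a where "a k = real (m choose k) * (1-s)^k * s^(m-k)" for k
  define b where "b n = (l * s) ^ n * exp (- l * s) / fact n" for n
  have a0: "0 \<le> a k" for k using s by (simp add: a_def)
  have b0: "0 \<le> b k" for k using s l by (simp add: b_def)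
  have "a sums (\<Sum>k\<in>{..m}. a k)"
    by (rule sums_finite) (auto simp: a_def)
  also have "(\<Sum>k\<in>{..m}. a k) = ((1 - s) + s) ^ m"
    unfolding binomial_ring a_def by simp
  finally have asum: "a sums 1" by simp
  have "(\<lambda>n. ((l * s) ^ n /\<^sub>R fact n) * exp (- l * s)) sums (exp (l * s) * exp (- l * s))"
    by (rule sums_mult2[OF exp_converges])
  moreover have "(\<lambda>n. ((l * s) ^ n /\<^sub>R fact n) * exp (- l * s)) = b"
    by (simp add: b_def fun_eq_iff field_simps)
  moreover have "exp (l * s) * exp (- l * s) = 1" by (simp add: exp_minus)
  ultimately have bsum: "b sums 1" by simp
  have "(\<lambda>k. \<Sum>i\<le>k. a i * b (k - i)) sums ((\<Sum>k. a k) * (\<Sum>k. b k))"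
    by (rule Cauchy_product_sums) (use asum bsum a0 b0 in \<open>auto simp: sums_summable\<close>)
  also have "(\<Sum>k. a k) = 1" using asum sums_unique by metis
  also have "(\<Sum>k. b k) = 1" using bsum sums_unique by metis
  finally have cs: "(\<lambda>k. \<Sum>i\<le>k. a i * b (k - i)) sums 1" by simp
  have "qk l s m n = (\<Sum>i\<le>n. a i * b (n - i))" for n
  proof -
    have "qk l s m n = (\<Sum>k\<in>{0..min m n}. a k * b (n - k))"
      unfolding qk_def a_def b_def by (intro sum.cong refl) (simp add: field_simps)
    also have "\<dots> = (\<Sum>i\<le>n. a i * b (n - i))"
      by (intro sum.mono_neutral_left) (auto simp: a_def)
    finally show ?thesis .
  qed
  then have "qk l s m = (\<lambda>k. \<Sum>i\<le>k. a i * b (k - i))" by (simp add: fun_eq_iff)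
  then show ?thesis using cs by simp
qed

lemma p_s_props:
  assumes lam: "\<forall>j. 0 < lam j" and s: "0 \<le> s" "s \<le> 1"
  shows "integrable (count_space UNIV) (p_s lam s y)"
    and "(\<integral>z. p_s lam s y z \<partial>count_space UNIV) = 1"
    and "0 \<le> p_s lam s y z"
proof -
  have l0: "0 \<le> lam j" for j using lam by (simp add: less_imp_le)
  have qs: "qk (lam j) s (y j) sums 1" for j by (rule qk_sums[OF l0 s])
  have qa: "Infinite_Set_Sum.abs_summable_on (qk (lam j) s (y j)) UNIV" for j
  proof -
    have "summable (qk (lam j) s (y j))" using sums_summable[OF qs[of j]] .
    moreover have "norm (qk (lam j) s (y j) n) = qk (lam j) s (y j) n" for n
      using qk_nonneg[OF l0 s] by simp
    ultimately show ?thesis unfolding abs_summable_on_nat_iff' by simp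
  qed
  have PU: "PiE (UNIV::'a set) (\<lambda>_. UNIV::nat set) = UNIV" by auto
  have feq: "(\<lambda>g. \<Prod>x\<in>UNIV. qk (lam x) s (y x) (g x)) = p_s lam s y"
    by (simp add: p_s_eq fun_eq_iff)
  have "Infinite_Set_Sum.abs_summable_on (\<lambda>g. \<Prod>x\<in>UNIV. qk (lam x) s (y x) (g x)) (PiE UNIV (\<lambda>_. UNIV))"
    by (rule abs_summable_on_prod_PiE) (use qa in auto)
  then show int: "integrable (count_space UNIV) (p_s lam s y)"
    unfolding PU feq abs_summable_on_def .
  have "infsetsum (\<lambda>g. \<Prod>x\<in>UNIV. qk (lam x) s (y x) (g x)) (PiE UNIV (\<lambda>_. UNIV))
      = (\<Prod>x\<in>UNIV. infsetsum (qk (lam x) s (y x)) UNIV)"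
    by (rule infsetsum_prod_PiE) (use qa in auto)
  also have "\<dots> = 1"
  proof -
    have "infsetsum (qk (lam x) s (y x)) UNIV = 1" for x
      using infsetsum_nat'[OF qa[of x]] sums_unique[OF qs[of x]] by simp
    then show ?thesis by simp
  qed
  finally show "(\<integral>z. p_s lam s y z \<partial>count_space UNIV) = 1"
    unfolding PU feq infsetsum_def .
  show "0 \<le> p_s lam s y z" unfolding p_s_eq by (intro prod_nonneg ballI qk_nonneg[OF l0 s])
qed

lemma Basis_vec_axis: "(Basis :: (real^'n::finite) set) = range (\<lambda>i. axis i 1)"
  by (auto simp: Basis_vec_def)

lemma nn_std_normal: "(\<integral>\<^sup>+x. ennreal (std_normal_density x) \<partial>lborel) = 1"
proof -
  interpret prob_space "density lborel (\<lambda>x. ennreal (normal_density 0 1 x))"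
    by (rule prob_space_normal_density) simp
  have "emeasure (density lborel (\<lambda>x. ennreal (normal_density 0 1 x))) UNIV = 1"
    using emeasure_space_1 by simp
  then show ?thesis by (simp add: emeasure_density)
qed

lemma std_gauss_prob: "prob_space (std_gauss :: (real^'n::finite) measure)"
proof
  have m: "(\<lambda>w::real^'n. ennreal (\<Prod>i\<in>UNIV. std_normal_density (w $ i))) \<in> borel_measurable lborel"
    by measurable
  have eq: "(\<lambda>w::real^'n. ennreal (\<Prod>i\<in>UNIV. std_normal_density (w $ i)))
     = (\<lambda>w. \<Prod>b\<in>Basis. ennreal (std_normal_density (w \<bullet> b)))"
  proof
    fix w :: "real^'n"
    have "(\<Prod>i\<in>UNIV. std_normal_density (w $ i)) = (\<Prod>b\<in>Basis. std_normal_density (w \<bullet> b))"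
      unfolding Basis_vec_axis
      by (subst prod.reindex) (auto simp: inj_on_def axis_eq_axis inner_axis)
    then show "ennreal (\<Prod>i\<in>UNIV. std_normal_density (w $ i)) = (\<Prod>b\<in>Basis. ennreal (std_normal_density (w \<bullet> b)))"
      by (simp add: prod_ennreal)
  qed
  have "emeasure std_gauss (space (std_gauss :: (real^'n) measure))
      = (\<integral>\<^sup>+w. ennreal (\<Prod>i\<in>UNIV. std_normal_density (w $ i)) \<partial>(lborel :: (real^'n) measure))"
    unfolding std_gauss_def using m by (simp add: emeasure_density)
  also have "\<dots> = (\<Prod>b\<in>(Basis :: (real^'n) set). (\<integral>\<^sup>+x. ennreal (std_normal_density x) \<partial>lborel))"
    unfolding eq by (rule nn_integral_lborel_prod) auto
  also have "\<dots> = 1" by (simp add: nn_std_normal)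
  finally show "emeasure std_gauss (space (std_gauss :: (real^'n) measure)) = 1" .
qed

lemma sets_gauss[simp, measurable_cong]: "sets (gauss S) = sets borel"
  by (simp add: gauss_def)

lemma space_gauss[simp]: "space (gauss S) = UNIV"
  by (simp add: gauss_def)

lemma gauss_prob: "prob_space (gauss (S :: real^'n::finite^'n))"
  unfolding gauss_def
proof (rule prob_space.prob_space_distr[OF std_gauss_prob])
  show "(*v) (sqrt_mat S) \<in> std_gauss \<rightarrow>\<^sub>M borel"
    by (auto simp: std_gauss_def intro!: borel_measurable_continuous_onI linear_continuous_on)
qed

lemma cont_meas_gauss:
  assumes "continuous_on UNIV f" shows "f \<in> borel_measurable (gauss S)"
  using borel_measurable_continuous_onI[OF assms] measurable_cong_sets[OF sets_gauss refl] by simp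

lemma S_op_bound:
  assumes c: "continuous_on UNIV (\<lambda>x. g x z)" and b: "\<And>x. \<bar>g x z\<bar> \<le> B"
  shows "\<bar>S_op S s g x z\<bar> \<le> B"
    and "integrable (gauss S) (\<lambda>u. g (sqrt (1 - s) *\<^sub>R x + sqrt s *\<^sub>R u) z)"
proof -
  interpret prob_space "gauss S" by (rule gauss_prob)
  have m: "(\<lambda>u. g (sqrt (1 - s) *\<^sub>R x + sqrt s *\<^sub>R u) z) \<in> borel_measurable (gauss S)"
    by (rule cont_meas_gauss, rule continuous_on_compose2[OF c]) (auto intro!: continuous_intros)
  show int: "integrable (gauss S) (\<lambda>u. g (sqrt (1 - s) *\<^sub>R x + sqrt s *\<^sub>R u) z)"
    by (rule integrable_const_bound[where B=B]) (use b m in auto)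
  have "\<bar>S_op S s g x z\<bar> \<le> (\<integral>u. \<bar>g (sqrt (1 - s) *\<^sub>R x + sqrt s *\<^sub>R u) z\<bar> \<partial>gauss S)"
    unfolding S_op_def by (rule integral_abs_bound)
  also have "\<dots> \<le> B"
    by (rule integral_le_const) (use int b in auto)
  finally show "\<bar>S_op S s g x z\<bar> \<le> B" .
qed

lemma S_op_meas:
  assumes c: "continuous_on UNIV (\<lambda>x. g x z)"
  shows "(\<lambda>s. S_op S s g x z) \<in> borel_measurable borel"
proof -
  interpret prob_space "gauss S" by (rule gauss_prob)
  have "continuous_on UNIV (\<lambda>(s, u). g (sqrt (1 - s) *\<^sub>R x + sqrt s *\<^sub>R u) z)"
    unfolding case_prod_beta
    by (rule continuous_on_compose2[OF c]) (auto intro!: continuous_intros)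
  then have "(\<lambda>(s, u). g (sqrt (1 - s) *\<^sub>R x + sqrt s *\<^sub>R u) z) \<in> borel_measurable borel"
    by (rule borel_measurable_continuous_onI)
  then have "(\<lambda>(s, u). g (sqrt (1 - s) *\<^sub>R x + sqrt s *\<^sub>R u) z) \<in> borel_measurable (borel \<Otimes>\<^sub>M gauss S)"
    by (simp add: borel_prod[symmetric] cong: measurable_cong_sets)
  then show ?thesis unfolding S_op_def by (rule borel_measurable_lebesgue_integral)
qed

lemma p_s_meas: "(\<lambda>s. p_s lam s y z) \<in> borel_measurable borel"
  unfolding p_s_def by measurable

definition gb :: "(real^'n::finite \<Rightarrow> ('m::finite \<Rightarrow> nat) \<Rightarrow> real) \<Rightarrow> real \<Rightarrow> bool" where
  "gb g B \<longleftrightarrow> (\<forall>z. continuous_on UNIV (\<lambda>x. g x z)) \<and> (\<forall>x z. \<bar>g x z\<bar> \<le> B)"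

lemma gbD: "gb g B \<Longrightarrow> continuous_on UNIV (\<lambda>x. g x z)" "gb g B \<Longrightarrow> \<bar>g x z\<bar> \<le> B"
  "gb g B \<Longrightarrow> 0 \<le> B"
  unfolding gb_def by (auto intro: order_trans[OF abs_ge_zero])

lemma S_gb:
  assumes "gb g B"
  shows "\<bar>S_op S s g x z\<bar> \<le> B"
    and "integrable (gauss S) (\<lambda>u. g (sqrt (1 - s) *\<^sub>R x + sqrt s *\<^sub>R u) z)"
    and "(\<lambda>s. S_op S s g x z) \<in> borel_measurable borel"
proof -
  have c: "continuous_on UNIV (\<lambda>x. g x z)" and b: "\<And>x. \<bar>g x z\<bar> \<le> B"
    using gbD[OF assms] by auto
  show "\<bar>S_op S s g x z\<bar> \<le> B" by (rule S_op_bound(1)[where g=g and z=z and B=B, OF c b])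
  show "integrable (gauss S) (\<lambda>u. g (sqrt (1 - s) *\<^sub>R x + sqrt s *\<^sub>R u) z)"
    by (rule S_op_bound(2)[where g=g and z=z and B=B, OF c b])
  show "(\<lambda>s. S_op S s g x z) \<in> borel_measurable borel" by (rule S_op_meas[where g=g and z=z, OF c])
qed

context
  fixes lam :: "'m::finite \<Rightarrow> real"
  assumes lam: "\<forall>j. 0 < lam j"
begin

lemma T_int:
  fixes g :: "real^'n::finite \<Rightarrow> ('m \<Rightarrow> nat) \<Rightarrow> real"
  assumes g: "gb g B" and s: "0 \<le> s" "s \<le> 1"
  shows "integrable (count_space UNIV) (\<lambda>z. S_op S s g x z * p_s lam s y z)"
    and "T_op S lam s g x y = (\<integral>z. S_op S s g x z * p_s lam s y z \<partial>count_space UNIV)"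
    and "\<bar>T_op S lam s g x y\<bar> \<le> B"
proof -
  note P = p_s_props[OF lam s, of y]
  have Sb: "\<bar>S_op S s g x z\<bar> \<le> B" for x z by (rule S_gb(1)[OF g])
  have B0: "0 \<le> B" using gbD(3)[OF g] .
  show int: "integrable (count_space UNIV) (\<lambda>z. S_op S s g x z * p_s lam s y z)"
  proof (rule Bochner_Integration.integrable_bound[of _ "\<lambda>z. B * p_s lam s y z"])
    show "integrable (count_space UNIV) (\<lambda>z. B * p_s lam s y z)"
      using P(1) by (rule integrable_mult_right)
    show "AE z in count_space UNIV. norm (S_op S s g x z * p_s lam s y z) \<le> norm (B * p_s lam s y z)"
      using Sb P(3) B0 by (auto simp: abs_mult intro!: mult_right_mono)
  qed simp
  show eq: "T_op S lam s g x y = (\<integral>z. S_op S s g x z * p_s lam s y z \<partial>count_space UNIV)"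
    unfolding T_op_def using infsetsum_infsum[of "\<lambda>z. S_op S s g x z * p_s lam s y z" UNIV] int
    by (simp add: abs_summable_on_def infsetsum_def)
  have "\<bar>\<integral>z. S_op S s g x z * p_s lam s y z \<partial>count_space UNIV\<bar>
      \<le> (\<integral>z. \<bar>S_op S s g x z * p_s lam s y z\<bar> \<partial>count_space UNIV)"
    by (rule integral_abs_bound)
  also have "\<dots> \<le> (\<integral>z. B * p_s lam s y z \<partial>count_space UNIV)"
  proof (rule integral_mono)
    show "integrable (count_space UNIV) (\<lambda>z. \<bar>S_op S s g x z * p_s lam s y z\<bar>)"
      using int by (rule integrable_abs)
    show "integrable (count_space UNIV) (\<lambda>z. B * p_s lam s y z)"
      using P(1) by (rule integrable_mult_right)
    show "\<bar>S_op S s g x z * p_s lam s y z\<bar> \<le> B * p_s lam s y z" for z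
      using Sb[of x z] P(3)[of z] by (simp add: abs_mult mult_right_mono)
  qed
  also have "\<dots> = B" using P(2) by simp
  finally show "\<bar>T_op S lam s g x y\<bar> \<le> B" unfolding eq .
qed

lemma T_meas:
  fixes g :: "real^'n::finite \<Rightarrow> ('m \<Rightarrow> nat) \<Rightarrow> real"
  assumes g: "gb g B"
  shows "(\<lambda>s. indicator {0..1} s * T_op S lam s g x y) \<in> borel_measurable borel"
proof -
  interpret sigma_finite_measure "count_space (UNIV :: ('m \<Rightarrow> nat) set)"
    by (rule sigma_finite_measure_count_space_countable) simp
  have eq: "(\<lambda>s. indicator {0..1} s * T_op S lam s g x y)
      = (\<lambda>s. indicator {0..1} s * (\<integral>z. S_op S s g x z * p_s lam s y z \<partial>count_space UNIV))"
    using T_int(2)[OF g] by (auto simp: fun_eq_iff indicator_def)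
  have mz: "(\<lambda>w. S_op S (fst w) g x z * p_s lam (fst w) y z) \<in> borel_measurable (borel \<Otimes>\<^sub>M count_space UNIV)"
    if "z \<in> UNIV" for z
  proof -
    note [measurable] = S_gb(3)[OF g, of S x z] p_s_meas[of lam y z]
    show ?thesis by measurable
  qed
  have "(\<lambda>w. (\<lambda>z w. S_op S (fst w) g x z * p_s lam (fst w) y z) (snd w) w)
      \<in> borel_measurable (borel \<Otimes>\<^sub>M count_space UNIV)"
    by (rule measurable_compose_countable'[where f="\<lambda>z w. S_op S (fst w) g x z * p_s lam (fst w) y z"
          and g=snd and I=UNIV, OF mz measurable_snd]) auto
  then have "(\<lambda>(s, z). S_op S s g x z * p_s lam s y z) \<in> borel_measurable (borel \<Otimes>\<^sub>M count_space UNIV)"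
    by (simp add: case_prod_beta)
  then have "(\<lambda>s. \<integral>z. S_op S s g x z * p_s lam s y z \<partial>count_space UNIV) \<in> borel_measurable borel"
    by (rule borel_measurable_lebesgue_integral)
  then show ?thesis unfolding eq by measurable
qed

lemma S_deriv:
  fixes g :: "real^'n::finite \<Rightarrow> ('m \<Rightarrow> nat) \<Rightarrow> real"
  assumes g: "gb g B" and s: "0 \<le> s" "s \<le> 1"
    and hp: "\<And>z. has_pd j (\<lambda>x. g x z)" and g1: "gb (\<lambda>x z. pd j (\<lambda>x. g x z) x) B1"
  shows "((\<lambda>t. S_op S s g (x + t *\<^sub>R axis j 1) z) has_real_derivative
      sqrt (1 - s) * S_op S s (\<lambda>x z. pd j (\<lambda>x. g x z) x) x z) (at 0)"
proof -
  interpret prob_space "gauss S" by (rule gauss_prob)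
  let ?a = "sqrt (1 - s)" and ?b = "sqrt s"
  have a01: "0 \<le> ?a" "?a \<le> 1" using s by auto
  have "((\<lambda>t. \<integral>u. (\<lambda>u x. g (?a *\<^sub>R x + ?b *\<^sub>R u) z) u (x + t *\<^sub>R axis j 1) \<partial>gauss S) has_real_derivative
      (\<integral>u. (\<lambda>u x. ?a * pd j (\<lambda>x. g x z) (?a *\<^sub>R x + ?b *\<^sub>R u)) u x \<partial>gauss S)) (at 0)"
  proof (rule line_DERIV_integral[where B="\<lambda>_. B1"])
    fix u x
    have "((\<lambda>t. g ((?a *\<^sub>R x + ?b *\<^sub>R u) + (?a * t) *\<^sub>R axis j 1) z) has_real_derivative
        ?a * pd j (\<lambda>x. g x z) ((?a *\<^sub>R x + ?b *\<^sub>R u) + (?a * 0) *\<^sub>R axis j 1)) (at 0)"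
      by (rule pd_scaled_DERIV[OF hp])
    moreover have "(\<lambda>t. g ((?a *\<^sub>R x + ?b *\<^sub>R u) + (?a * t) *\<^sub>R axis j 1) z)
        = (\<lambda>t. g (?a *\<^sub>R (x + t *\<^sub>R axis j 1) + ?b *\<^sub>R u) z)"
      by (simp add: algebra_simps)
    ultimately show "((\<lambda>t. (\<lambda>u x. g (?a *\<^sub>R x + ?b *\<^sub>R u) z) u (x + t *\<^sub>R axis j 1)) has_real_derivative
        (\<lambda>u x. ?a * pd j (\<lambda>x. g x z) (?a *\<^sub>R x + ?b *\<^sub>R u)) u x) (at 0)"
      by simp
  next
    fix x
    show "(\<lambda>u. (\<lambda>u x. g (?a *\<^sub>R x + ?b *\<^sub>R u) z) u x) \<in> borel_measurable (gauss S)"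
      by (rule cont_meas_gauss, rule continuous_on_compose2[OF gbD(1)[OF g]]) (auto intro!: continuous_intros)
    show "(\<lambda>u. (\<lambda>u x. ?a * pd j (\<lambda>x. g x z) (?a *\<^sub>R x + ?b *\<^sub>R u)) u x) \<in> borel_measurable (gauss S)"
      by (rule cont_meas_gauss, intro continuous_intros, rule continuous_on_compose2[OF gbD(1)[OF g1]])
         (auto intro!: continuous_intros)
    show "integrable (gauss S) (\<lambda>u. (\<lambda>u x. g (?a *\<^sub>R x + ?b *\<^sub>R u) z) u x)"
      using S_gb(2)[OF g] by simp
  next
    show "integrable (gauss S) (\<lambda>_. B1)" by simp
  next
    fix u x
    have "\<bar>?a * pd j (\<lambda>x. g x z) (?a *\<^sub>R x + ?b *\<^sub>R u)\<bar> \<le> 1 * B1"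
      unfolding abs_mult
      by (rule mult_mono) (use a01 gbD(2,3)[OF g1] in auto)
    then show "\<bar>(\<lambda>u x. ?a * pd j (\<lambda>x. g x z) (?a *\<^sub>R x + ?b *\<^sub>R u)) u x\<bar> \<le> B1" by simp
  qed
  then show ?thesis by (simp add: S_op_def)
qed

lemma T_deriv:
  fixes g :: "real^'n::finite \<Rightarrow> ('m \<Rightarrow> nat) \<Rightarrow> real"
  assumes g: "gb g B" and s: "0 \<le> s" "s \<le> 1"
    and hp: "\<And>z. has_pd j (\<lambda>x. g x z)" and g1: "gb (\<lambda>x z. pd j (\<lambda>x. g x z) x) B1"
  shows "((\<lambda>t. T_op S lam s g (x + t *\<^sub>R axis j 1) y) has_real_derivative
      sqrt (1 - s) * T_op S lam s (\<lambda>x z. pd j (\<lambda>x. g x z) x) x y) (at 0)"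
proof -
  note P = p_s_props[OF lam s, of y]
  let ?a = "sqrt (1 - s)"
  let ?g1 = "\<lambda>x z. pd j (\<lambda>x. g x z) x"
  have a01: "0 \<le> ?a" "?a \<le> 1" using s by auto
  have "((\<lambda>t. \<integral>z. (\<lambda>z x. S_op S s g x z * p_s lam s y z) z (x + t *\<^sub>R axis j 1) \<partial>count_space UNIV) has_real_derivative
      (\<integral>z. (\<lambda>z x. (?a * S_op S s ?g1 x z) * p_s lam s y z) z x \<partial>count_space UNIV)) (at 0)"
  proof (rule line_DERIV_integral[where B="\<lambda>z. B1 * p_s lam s y z"])
    fix z x
    show "((\<lambda>t. (\<lambda>z x. S_op S s g x z * p_s lam s y z) z (x + t *\<^sub>R axis j 1)) has_real_derivative
        (\<lambda>z x. (?a * S_op S s ?g1 x z) * p_s lam s y z) z x) (at 0)"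
      using DERIV_cmult_right[OF S_deriv[OF g s hp g1, of S x z]] by simp
  next
    fix x
    show "integrable (count_space UNIV) (\<lambda>z. (\<lambda>z x. S_op S s g x z * p_s lam s y z) z x)"
      using T_int(1)[OF g s] by simp
  next
    show "integrable (count_space UNIV) (\<lambda>z. B1 * p_s lam s y z)"
      using P(1) by (rule integrable_mult_right)
  next
    fix z x
    have "\<bar>?a * S_op S s ?g1 x z\<bar> \<le> 1 * B1"
      unfolding abs_mult
      by (rule mult_mono) (use a01 S_gb(1)[OF g1] gbD(3)[OF g1] in auto)
    then show "\<bar>(\<lambda>z x. (?a * S_op S s ?g1 x z) * p_s lam s y z) z x\<bar> \<le> B1 * p_s lam s y z"
      using P(3) by (simp add: abs_mult mult_right_mono)
  qed simp_all
  moreover have "(\<integral>z. (\<lambda>z x. (?a * S_op S s ?g1 x z) * p_s lam s y z) z x \<partial>count_space UNIV)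
      = ?a * T_op S lam s ?g1 x y"
    using T_int(2)[OF g1 s] by (simp add: mult.assoc)
  moreover have "(\<lambda>t. \<integral>z. (\<lambda>z x. S_op S s g x z * p_s lam s y z) z (x + t *\<^sub>R axis j 1) \<partial>count_space UNIV)
      = (\<lambda>t. T_op S lam s g (x + t *\<^sub>R axis j 1) y)"
    using T_int(2)[OF g s] by simp
  ultimately show ?thesis by simp
qed

lemma T_cont:
  fixes g :: "real^'n::finite \<Rightarrow> ('m \<Rightarrow> nat) \<Rightarrow> real"
  assumes g: "gb g B" and s: "0 \<le> s" "s \<le> 1"
  shows "continuous_on UNIV (\<lambda>x. T_op S lam s g x y)"
proof -
  interpret prob_space "gauss S" by (rule gauss_prob)
  note P = p_s_props[OF lam s, of y]
  have Sc: "continuous_on UNIV (\<lambda>x. S_op S s g x z)" for z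
    unfolding S_op_def
  proof (rule continuous_integral[where B="\<lambda>_. B"])
    show "continuous_on UNIV (\<lambda>x. g (sqrt (1 - s) *\<^sub>R x + sqrt s *\<^sub>R u) z)" for u
      by (rule continuous_on_compose2[OF gbD(1)[OF g]]) (auto intro!: continuous_intros)
    show "(\<lambda>u. g (sqrt (1 - s) *\<^sub>R x + sqrt s *\<^sub>R u) z) \<in> borel_measurable (gauss S)" for x
      by (rule cont_meas_gauss, rule continuous_on_compose2[OF gbD(1)[OF g]]) (auto intro!: continuous_intros)
  qed (use gbD(2)[OF g] in auto)
  have "continuous_on UNIV (\<lambda>x. \<integral>z. S_op S s g x z * p_s lam s y z \<partial>count_space UNIV)"
  proof (rule continuous_integral[where B="\<lambda>z. B * p_s lam s y z"])
    show "continuous_on UNIV (\<lambda>x. S_op S s g x z * p_s lam s y z)" for z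
      by (intro continuous_intros Sc)
    show "integrable (count_space UNIV) (\<lambda>z. B * p_s lam s y z)"
      using P(1) by (rule integrable_mult_right)
    show "\<bar>S_op S s g x z * p_s lam s y z\<bar> \<le> B * p_s lam s y z" for x z
      using P(3) S_gb(1)[OF g] by (simp add: abs_mult mult_right_mono)
  qed simp
  then show ?thesis using T_int(2)[OF g s] by simp
qed

lemma T_lip:
  fixes g :: "real^'n::finite \<Rightarrow> ('m \<Rightarrow> nat) \<Rightarrow> real"
  assumes g: "gb g B" and s: "0 \<le> s" "s \<le> 1"
    and L: "\<And>x x' z. \<bar>g x z - g x' z\<bar> \<le> L * dist x x'"
  shows "\<bar>T_op S lam s g x y - T_op S lam s g x' y\<bar> \<le> sqrt (1 - s) * L * dist x x'"
proof -
  interpret prob_space "gauss S" by (rule gauss_prob)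
  note P = p_s_props[OF lam s, of y]
  let ?a = "sqrt (1 - s)" and ?b = "sqrt s"
  have a0: "0 \<le> ?a" using s by auto
  have Sl: "\<bar>S_op S s g x z - S_op S s g x' z\<bar> \<le> ?a * L * dist x x'" for z
  proof -
    have i1: "integrable (gauss S) (\<lambda>u. g (?a *\<^sub>R x + ?b *\<^sub>R u) z)"
      and i2: "integrable (gauss S) (\<lambda>u. g (?a *\<^sub>R x' + ?b *\<^sub>R u) z)"
      using S_gb(2)[OF g] by auto
    have "S_op S s g x z - S_op S s g x' z = (\<integral>u. g (?a *\<^sub>R x + ?b *\<^sub>R u) z - g (?a *\<^sub>R x' + ?b *\<^sub>R u) z \<partial>gauss S)"
      unfolding S_op_def using i1 i2 by simp
    also have "\<bar>\<dots>\<bar> \<le> (\<integral>u. \<bar>g (?a *\<^sub>R x + ?b *\<^sub>R u) z - g (?a *\<^sub>R x' + ?b *\<^sub>R u) z\<bar> \<partial>gauss S)"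
      by (rule integral_abs_bound)
    also have "\<dots> \<le> ?a * L * dist x x'"
    proof (rule integral_le_const)
      show "integrable (gauss S) (\<lambda>u. \<bar>g (?a *\<^sub>R x + ?b *\<^sub>R u) z - g (?a *\<^sub>R x' + ?b *\<^sub>R u) z\<bar>)"
        using i1 i2 by auto
      have "dist (?a *\<^sub>R x + ?b *\<^sub>R u) (?a *\<^sub>R x' + ?b *\<^sub>R u) = ?a * dist x x'" for u
        using a0 by (simp add: dist_norm scaleR_diff_right[symmetric])
      then show "AE u in gauss S. \<bar>g (?a *\<^sub>R x + ?b *\<^sub>R u) z - g (?a *\<^sub>R x' + ?b *\<^sub>R u) z\<bar> \<le> ?a * L * dist x x'"
        using L[of "?a *\<^sub>R x + ?b *\<^sub>R u" z "?a *\<^sub>R x' + ?b *\<^sub>R u" for u] by (auto simp: mult_ac)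
    qed
    finally show ?thesis .
  qed
  have i1: "integrable (count_space UNIV) (\<lambda>z. S_op S s g x z * p_s lam s y z)"
    and i2: "integrable (count_space UNIV) (\<lambda>z. S_op S s g x' z * p_s lam s y z)"
    using T_int(1)[OF g s] by auto
  have "T_op S lam s g x y - T_op S lam s g x' y
      = (\<integral>z. (S_op S s g x z - S_op S s g x' z) * p_s lam s y z \<partial>count_space UNIV)"
    using T_int(2)[OF g s] i1 i2 by (simp add: left_diff_distrib)
  also have "\<bar>\<dots>\<bar> \<le> (\<integral>z. \<bar>(S_op S s g x z - S_op S s g x' z) * p_s lam s y z\<bar> \<partial>count_space UNIV)"
    by (rule integral_abs_bound)
  also have "\<dots> \<le> (\<integral>z. (?a * L * dist x x') * p_s lam s y z \<partial>count_space UNIV)"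
  proof (rule integral_mono)
    show "integrable (count_space UNIV) (\<lambda>z. \<bar>(S_op S s g x z - S_op S s g x' z) * p_s lam s y z\<bar>)"
      using i1 i2 by (auto simp: left_diff_distrib)
    show "integrable (count_space UNIV) (\<lambda>z. (?a * L * dist x x') * p_s lam s y z)"
      using P(1) by (rule integrable_mult_right)
    show "\<bar>(S_op S s g x z - S_op S s g x' z) * p_s lam s y z\<bar> \<le> (?a * L * dist x x') * p_s lam s y z" for z
      using Sl[of z] P(3) by (simp add: abs_mult mult_right_mono)
  qed
  also have "\<dots> = ?a * L * dist x x'" using P(2) by simp
  finally show ?thesis .
qed

end

lemma weight_integral:
  fixes f F :: "real \<Rightarrow> real"
  assumes D: "\<And>x. 0 < x \<Longrightarrow> x < 1 \<Longrightarrow> DERIV F x :> f x"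
    and C: "\<And>x. 0 < x \<Longrightarrow> x < 1 \<Longrightarrow> isCont f x"
    and P: "\<And>x. 0 < x \<Longrightarrow> x < 1 \<Longrightarrow> 0 \<le> f x"
    and A: "(F \<longlongrightarrow> A) (at_right 0)" and B: "(F \<longlongrightarrow> B) (at_left 1)"
  shows "set_integrable lborel {0..1} f" "(LBINT s:{0..1}. f s) = B - A"
proof -
  have "set_integrable lborel (einterval (ereal 0) (ereal 1)) f \<and> (LBINT x=ereal 0..ereal 1. f x) = B - A"
    by (intro conjI interval_integral_FTC_nonneg[where F=F])
       (use D C A B P in \<open>auto simp: ereal_tendsto_simps1 intro!: AE_I2\<close>)
  then have i: "set_integrable lborel {0<..<1} f" and v: "(LBINT s:{0<..<1}. f s) = B - A"
    by (auto simp: interval_lebesgue_integral_def)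
  have eq: "indicator {0<..<1} s *\<^sub>R f s = indicator {0..1} s *\<^sub>R f s" if "s \<in> space lborel" "s \<notin> {0, 1}" for s :: real
    using that by (auto simp: indicator_def)
  show "set_integrable lborel {0..1} f"
    using i unfolding set_integrable_def
    by (subst integrable_discrete_difference[where X="{0,1}", OF _ _ _ eq, symmetric]) auto
  show "(LBINT s:{0..1}. f s) = B - A"
    using v unfolding set_lebesgue_integral_def
    by (subst integral_discrete_difference[where X="{0,1}", OF _ _ _ eq, symmetric]) auto
qed

lemma conjI_weight:
  fixes f F :: "real \<Rightarrow> real"
  assumes "\<And>x. 0 < x \<Longrightarrow> x < 1 \<Longrightarrow> DERIV F x :> f x"
    and "\<And>x. 0 < x \<Longrightarrow> x < 1 \<Longrightarrow> isCont f x"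
    and "\<And>x. 0 < x \<Longrightarrow> x < 1 \<Longrightarrow> 0 \<le> f x"
    and "(F \<longlongrightarrow> A) (at_right 0)" and "(F \<longlongrightarrow> B) (at_left 1)"
  shows "set_integrable lborel {0..1} f \<and> (LBINT s:{0..1}. f s) = B - A"
  using weight_integral[OF assms] by blast

lemma w1: "set_integrable lborel {0..1} (\<lambda>s. 1 / (2 * (1 - s)) * sqrt (1 - s))"
  "(LBINT s:{0..1}. 1 / (2 * (1 - s)) * sqrt (1 - s)) = 1"
proof -
  have "set_integrable lborel {0..1} (\<lambda>s. 1 / (2 * (1 - s)) * sqrt (1 - s)) \<and>
     (LBINT s:{0..1}. 1 / (2 * (1 - s)) * sqrt (1 - s)) = 0 - (-1)"
  proof (rule conjI_weight[where F="\<lambda>s. - sqrt (1 - s)"])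
    fix x :: real assume x: "0 < x" "x < 1"
    show "DERIV (\<lambda>s. - sqrt (1 - s)) x :> 1 / (2 * (1 - x)) * sqrt (1 - x)"
    proof (rule DERIV_cong)
      show "DERIV (\<lambda>s. - sqrt (1 - s)) x :> - (inverse (sqrt (1 - x)) / 2 * (0 - 1))"
        using x by (auto intro!: derivative_eq_intros)
      have "sqrt (1 - x) * sqrt (1 - x) = 1 - x" using x by simp
      then show "- (inverse (sqrt (1 - x)) / 2 * (0 - 1)) = 1 / (2 * (1 - x)) * sqrt (1 - x)"
        using x by (simp add: field_simps)
    qed
    show "isCont (\<lambda>s. 1 / (2 * (1 - s)) * sqrt (1 - s)) x"
      using x by (auto intro!: continuous_intros)
    show "0 \<le> 1 / (2 * (1 - x)) * sqrt (1 - x)" using x by simp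
  next
    show "((\<lambda>s. - sqrt (1 - s)) \<longlongrightarrow> -1) (at_right 0)"
      by (rule tendsto_eq_intros refl | simp)+
    show "((\<lambda>s. - sqrt (1 - s)) \<longlongrightarrow> 0) (at_left 1)"
      by (rule tendsto_eq_intros refl | simp)+
  qed
  then show "set_integrable lborel {0..1} (\<lambda>s. 1 / (2 * (1 - s)) * sqrt (1 - s))"
    "(LBINT s:{0..1}. 1 / (2 * (1 - s)) * sqrt (1 - s)) = 1" by auto
qed

lemma w2: "set_integrable lborel {0..1} (\<lambda>s. 1 / (2 * (1 - s)) * sqrt (1 - s) * sqrt (1 - s))"
  "(LBINT s:{0..1}. 1 / (2 * (1 - s)) * sqrt (1 - s) * sqrt (1 - s)) = 1/2"
proof -
  have "set_integrable lborel {0..1} (\<lambda>s. 1 / (2 * (1 - s)) * sqrt (1 - s) * sqrt (1 - s)) \<and>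
     (LBINT s:{0..1}. 1 / (2 * (1 - s)) * sqrt (1 - s) * sqrt (1 - s)) = 1/2 - 0"
  proof (rule conjI_weight[where F="\<lambda>s. s / 2"])
    fix x :: real assume x: "0 < x" "x < 1"
    show "DERIV (\<lambda>s. s / 2) x :> 1 / (2 * (1 - x)) * sqrt (1 - x) * sqrt (1 - x)"
    proof (rule DERIV_cong)
      show "DERIV (\<lambda>s. s / 2) x :> 1 / 2"
        by (auto intro!: derivative_eq_intros)
      have "sqrt (1 - x) * sqrt (1 - x) = 1 - x" using x by simp
      then show "1 / 2 = 1 / (2 * (1 - x)) * sqrt (1 - x) * sqrt (1 - x)"
        using x by (simp add: field_simps)
    qed
    show "isCont (\<lambda>s. 1 / (2 * (1 - s)) * sqrt (1 - s) * sqrt (1 - s)) x"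
      using x by (auto intro!: continuous_intros)
    show "0 \<le> 1 / (2 * (1 - x)) * sqrt (1 - x) * sqrt (1 - x)" using x by simp
  next
    show "((\<lambda>s::real. s / 2) \<longlongrightarrow> 0) (at_right 0)"
      by (rule tendsto_eq_intros refl | simp)+
    show "((\<lambda>s::real. s / 2) \<longlongrightarrow> 1/2) (at_left 1)"
      by (rule tendsto_eq_intros refl | simp)+
  qed
  then show "set_integrable lborel {0..1} (\<lambda>s. 1 / (2 * (1 - s)) * sqrt (1 - s) * sqrt (1 - s))"
    "(LBINT s:{0..1}. 1 / (2 * (1 - s)) * sqrt (1 - s) * sqrt (1 - s)) = 1/2" by auto
qed

lemma w3: "set_integrable lborel {0..1} (\<lambda>s. 1 / (2 * (1 - s)) * sqrt (1 - s) * sqrt (1 - s) * sqrt (1 - s))"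
  "(LBINT s:{0..1}. 1 / (2 * (1 - s)) * sqrt (1 - s) * sqrt (1 - s) * sqrt (1 - s)) = 1/3"
proof -
  have "set_integrable lborel {0..1} (\<lambda>s. 1 / (2 * (1 - s)) * sqrt (1 - s) * sqrt (1 - s) * sqrt (1 - s)) \<and>
     (LBINT s:{0..1}. 1 / (2 * (1 - s)) * sqrt (1 - s) * sqrt (1 - s) * sqrt (1 - s)) = 0 - (- 1/3)"
  proof (rule conjI_weight[where F="\<lambda>s. - ((1 - s) * sqrt (1 - s)) / 3"])
    fix x :: real assume x: "0 < x" "x < 1"
    show "DERIV (\<lambda>s. - ((1 - s) * sqrt (1 - s)) / 3) x :> 1 / (2 * (1 - x)) * sqrt (1 - x) * sqrt (1 - x) * sqrt (1 - x)"
    proof (rule DERIV_cong)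
      have d1: "DERIV (\<lambda>s. 1 - s) x :> 0 - 1" by (auto intro!: derivative_eq_intros)
      have d2: "DERIV (\<lambda>s. sqrt (1 - s)) x :> inverse (sqrt (1 - x)) / 2 * (0 - 1)"
        using x by (auto intro!: derivative_eq_intros)
      have d3: "DERIV (\<lambda>s. (1 - s) * sqrt (1 - s)) x :> (0 - 1) * sqrt (1 - x) + (inverse (sqrt (1 - x)) / 2 * (0 - 1)) * (1 - x)"
        using DERIV_mult[OF d1 d2] by simp
      show "DERIV (\<lambda>s. - ((1 - s) * sqrt (1 - s)) / 3) x :>
          - ((0 - 1) * sqrt (1 - x) + (1 - x) * (inverse (sqrt (1 - x)) / 2 * (0 - 1))) / 3"
        using DERIV_cdivide[OF DERIV_minus[OF d3], of 3] by (simp add: mult.commute)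
      define r where "r = sqrt (1 - x)"
      have r0: "r > 0" using x by (simp add: r_def)
      have rr: "1 - x = r * r" using x by (simp add: r_def)
      have e1: "(1 - x) * inverse r = r" unfolding rr using r0 by (simp add: field_simps)
      have e2: "1 / (2 * (1 - x)) * r * r * r = r / 2" unfolding rr using r0 by (simp add: field_simps)
      have e3: "(1 - x) * (inverse r / 2 * (0 - 1)) = - r / 2"
      proof -
        have "(1 - x) * (inverse r / 2 * (0 - 1)) = - ((1 - x) * inverse r) / 2" by simp
        then show ?thesis using e1 by simp
      qed
      show "- ((0 - 1) * sqrt (1 - x) + (1 - x) * (inverse (sqrt (1 - x)) / 2 * (0 - 1))) / 3
          = 1 / (2 * (1 - x)) * sqrt (1 - x) * sqrt (1 - x) * sqrt (1 - x)"
        unfolding r_def[symmetric] e2 e3 by simp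
    qed
    show "isCont (\<lambda>s. 1 / (2 * (1 - s)) * sqrt (1 - s) * sqrt (1 - s) * sqrt (1 - s)) x"
      using x by (auto intro!: continuous_intros)
    show "0 \<le> 1 / (2 * (1 - x)) * sqrt (1 - x) * sqrt (1 - x) * sqrt (1 - x)" using x by simp
  next
    show "((\<lambda>s. - ((1 - s) * sqrt (1 - s)) / 3) \<longlongrightarrow> - 1/3) (at_right 0)"
      by (rule tendsto_eq_intros refl | simp)+
    show "((\<lambda>s. - ((1 - s) * sqrt (1 - s)) / 3) \<longlongrightarrow> 0) (at_left 1)"
      by (rule tendsto_eq_intros refl | simp)+
  qed
  then show "set_integrable lborel {0..1} (\<lambda>s. 1 / (2 * (1 - s)) * sqrt (1 - s) * sqrt (1 - s) * sqrt (1 - s))"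
    "(LBINT s:{0..1}. 1 / (2 * (1 - s)) * sqrt (1 - s) * sqrt (1 - s) * sqrt (1 - s)) = 1/3" by auto
qed

lemma const_fun_props:
  fixes f :: "real^'n::finite \<Rightarrow> real"
  assumes c: "\<And>x. f x = C"
  shows "C3 f" "lip_const f = 0" "snorm2 f = 0" "snorm3 f = 0"
proof -
  have fe: "f = (\<lambda>x. C)" using c by auto
  have pc: "has_pd j (\<lambda>x. D) \<and> pd j (\<lambda>x::real^'n. D) = (\<lambda>x. 0)" for j D
    using has_pd_from_DERIV[of "\<lambda>x::real^'n. D" j "\<lambda>x. 0"] by simp
  show "C3 f" unfolding fe C3_def using pc by (simp add: continuous_on_const)
  show "snorm2 f = 0" unfolding fe snorm2_def using pc by simp
  show "snorm3 f = 0" unfolding fe snorm3_def using pc by simp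
  obtain i :: 'n where True by blast
  have ne: "{(x, y). x \<noteq> y} \<noteq> ({} :: ((real^'n) \<times> (real^'n)) set)"
    using axis_eq_0_iff[of i "1::real"] by auto
  show "lip_const f = 0" unfolding fe lip_const_def using ne by simp
qed

context
  fixes lam :: "'m::finite \<Rightarrow> real"
  assumes lam: "\<forall>j. 0 < lam j"
begin

lemma level_deriv:
  fixes g :: "real^'n::finite \<Rightarrow> ('m \<Rightarrow> nat) \<Rightarrow> real" and v c :: "real \<Rightarrow> real"
  assumes g: "gb g B" and hp: "\<And>z. has_pd j (\<lambda>x. g x z)" and g1: "gb (\<lambda>x z. pd j (\<lambda>x. g x z) x) B1"
    and vm: "v \<in> borel_measurable borel" and cm: "c \<in> borel_measurable borel"
    and v0: "\<And>s. 0 \<le> s \<Longrightarrow> s \<le> 1 \<Longrightarrow> 0 \<le> v s * sqrt (1 - s)"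
    and vi: "set_integrable lborel {0..1} (\<lambda>s. v s * sqrt (1 - s))"
    and ix: "\<And>x. set_integrable lborel {0..1} (\<lambda>s. v s * (T_op S lam s g x y - c s))"
  shows "((\<lambda>t. LBINT s:{0..1}. v s * (T_op S lam s g (x + t *\<^sub>R axis j 1) y - c s)) has_real_derivative
     (LBINT s:{0..1}. v s * sqrt (1 - s) * T_op S lam s (\<lambda>x z. pd j (\<lambda>x. g x z) x) x y)) (at 0)"
  unfolding set_lebesgue_integral_def
proof (rule line_DERIV_integral[where B="\<lambda>s. indicator {0..1} s *\<^sub>R (v s * sqrt (1 - s)) * B1"])
  let ?g1 = "\<lambda>x z. pd j (\<lambda>x. g x z) x"
  fix s :: real and x
  show "((\<lambda>t. indicator {0..1} s *\<^sub>R (v s * (T_op S lam s g (x + t *\<^sub>R axis j 1) y - c s))) has_real_derivative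
      indicator {0..1} s *\<^sub>R (v s * sqrt (1 - s) * T_op S lam s ?g1 x y)) (at 0)"
  proof (cases "s \<in> {0..1}")
    case True
    then have s: "0 \<le> s" "s \<le> 1" by auto
    have "((\<lambda>t. v s * (T_op S lam s g (x + t *\<^sub>R axis j 1) y - c s)) has_real_derivative
        v s * (sqrt (1 - s) * T_op S lam s ?g1 x y - 0)) (at 0)"
      by (intro DERIV_cmult DERIV_diff T_deriv[OF lam g s hp g1] DERIV_const)
    then show ?thesis using True by (simp add: mult.assoc)
  next
    case False
    then show ?thesis by simp
  qed
next
  let ?g1 = "\<lambda>x z. pd j (\<lambda>x. g x z) x"
  fix x
  note [measurable] = T_meas[OF lam g, of S x y] T_meas[OF lam g1, of S x y] vm cm
  have e1: "(\<lambda>s. indicator {0..1} s *\<^sub>R (v s * (T_op S lam s g x y - c s)))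
      = (\<lambda>s. v s * (indicator {0..1} s * T_op S lam s g x y) - indicator {0..1} s * (v s * c s))"
    by (auto simp: fun_eq_iff split: split_indicator simp: algebra_simps)
  show "(\<lambda>s. indicator {0..1} s *\<^sub>R (v s * (T_op S lam s g x y - c s))) \<in> borel_measurable lborel"
    unfolding e1 by measurable
  have e2: "(\<lambda>s. indicator {0..1} s *\<^sub>R (v s * sqrt (1 - s) * T_op S lam s ?g1 x y))
      = (\<lambda>s. v s * sqrt (1 - s) * (indicator {0..1} s * T_op S lam s ?g1 x y))"
    by (auto simp: fun_eq_iff split: split_indicator)
  show "(\<lambda>s. indicator {0..1} s *\<^sub>R (v s * sqrt (1 - s) * T_op S lam s ?g1 x y)) \<in> borel_measurable lborel"
    unfolding e2 by measurable
  show "integrable lborel (\<lambda>s. indicator {0..1} s *\<^sub>R (v s * (T_op S lam s g x y - c s)))"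
    using ix[of x] unfolding set_integrable_def .
next
  show "integrable lborel (\<lambda>s. indicator {0..1} s *\<^sub>R (v s * sqrt (1 - s)) * B1)"
    using vi unfolding set_integrable_def by (rule integrable_mult_left)
next
  let ?g1 = "\<lambda>x z. pd j (\<lambda>x. g x z) x"
  fix s :: real and x
  show "\<bar>indicator {0..1} s *\<^sub>R (v s * sqrt (1 - s) * T_op S lam s ?g1 x y)\<bar>
      \<le> indicator {0..1} s *\<^sub>R (v s * sqrt (1 - s)) * B1"
  proof (cases "s \<in> {0..1}")
    case True
    then have s: "0 \<le> s" "s \<le> 1" by auto
    have "\<bar>v s * sqrt (1 - s) * T_op S lam s ?g1 x y\<bar> = \<bar>v s * sqrt (1 - s)\<bar> * \<bar>T_op S lam s ?g1 x y\<bar>"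
      by (rule abs_mult)
    also have "\<dots> = (v s * sqrt (1 - s)) * \<bar>T_op S lam s ?g1 x y\<bar>"
      using v0[OF s] by simp
    also have "\<dots> \<le> (v s * sqrt (1 - s)) * B1"
      by (rule mult_left_mono[OF T_int(3)[OF lam g1 s] v0[OF s]])
    finally show ?thesis using True by simp
  qed simp
qed

lemma level_deriv0:
  fixes g :: "real^'n::finite \<Rightarrow> ('m \<Rightarrow> nat) \<Rightarrow> real" and v :: "real \<Rightarrow> real"
  assumes g: "gb g B" and hp: "\<And>z. has_pd j (\<lambda>x. g x z)" and g1: "gb (\<lambda>x z. pd j (\<lambda>x. g x z) x) B1"
    and vm: "v \<in> borel_measurable borel"
    and v0: "\<And>s. 0 \<le> s \<Longrightarrow> s \<le> 1 \<Longrightarrow> 0 \<le> v s * sqrt (1 - s)"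
    and vi: "set_integrable lborel {0..1} (\<lambda>s. v s * sqrt (1 - s))"
    and ix: "\<And>x. set_integrable lborel {0..1} (\<lambda>s. v s * T_op S lam s g x y)"
  shows "((\<lambda>t. LBINT s:{0..1}. v s * T_op S lam s g (x + t *\<^sub>R axis j 1) y) has_real_derivative
     (LBINT s:{0..1}. v s * sqrt (1 - s) * T_op S lam s (\<lambda>x z. pd j (\<lambda>x. g x z) x) x y)) (at 0)"
  using level_deriv[OF g hp g1 vm _ v0 vi, of "\<lambda>s. 0"] ix by simp

lemma level_cont:
  fixes g :: "real^'n::finite \<Rightarrow> ('m \<Rightarrow> nat) \<Rightarrow> real" and v :: "real \<Rightarrow> real"
  assumes g: "gb g B" and vm: "v \<in> borel_measurable borel"
    and v0: "\<And>s. 0 \<le> s \<Longrightarrow> s \<le> 1 \<Longrightarrow> 0 \<le> v s"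
    and vi: "set_integrable lborel {0..1} v"
  shows "set_integrable lborel {0..1} (\<lambda>s. v s * T_op S lam s g x y)"
    and "continuous_on UNIV (\<lambda>x. LBINT s:{0..1}. v s * T_op S lam s g x y)"
    and "\<bar>LBINT s:{0..1}. v s * T_op S lam s g x y\<bar> \<le> B * (LBINT s:{0..1}. v s)"
proof -
  have iB: "integrable lborel (\<lambda>s. indicator {0..1} s *\<^sub>R v s * B)"
    using vi unfolding set_integrable_def by (rule integrable_mult_left)
  have m: "(\<lambda>s. indicator {0..1} s *\<^sub>R (v s * T_op S lam s g x y)) \<in> borel_measurable lborel" for x
  proof -
    note [measurable] = T_meas[OF lam g, of S x y] vm
    have e: "(\<lambda>s. indicator {0..1} s *\<^sub>R (v s * T_op S lam s g x y))
        = (\<lambda>s. v s * (indicator {0..1} s * T_op S lam s g x y))"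
      by (auto simp: fun_eq_iff split: split_indicator)
    show ?thesis unfolding e by measurable
  qed
  have bd: "\<bar>indicator {0..1} s *\<^sub>R (v s * T_op S lam s g x y)\<bar> \<le> indicator {0..1} s *\<^sub>R v s * B" for s x
  proof (cases "s \<in> {0..1}")
    case True
    then have s: "0 \<le> s" "s \<le> 1" by auto
    have "\<bar>v s * T_op S lam s g x y\<bar> \<le> v s * B"
      unfolding abs_mult using v0[OF s] by (simp add: mult_left_mono[OF T_int(3)[OF lam g s]])
    then show ?thesis using True by simp
  qed simp
  have int: "integrable lborel (\<lambda>s. indicator {0..1} s *\<^sub>R (v s * T_op S lam s g x y))" for x
  proof (rule Bochner_Integration.integrable_bound[OF iB m], rule AE_I2)
    fix s
    show "norm (indicator {0..1} s *\<^sub>R (v s * T_op S lam s g x y)) \<le> norm (indicator {0..1} s *\<^sub>R v s * B)"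
      unfolding real_norm_def by (rule order_trans[OF bd abs_ge_self])
  qed
  show "set_integrable lborel {0..1} (\<lambda>s. v s * T_op S lam s g x y)"
    unfolding set_integrable_def by (rule int)
  show "continuous_on UNIV (\<lambda>x. LBINT s:{0..1}. v s * T_op S lam s g x y)"
    unfolding set_lebesgue_integral_def
  proof (rule continuous_integral[OF _ m iB bd])
    fix s :: real
    show "continuous_on UNIV (\<lambda>x. indicator {0..1} s *\<^sub>R (v s * T_op S lam s g x y))"
    proof (cases "s \<in> {0..1}")
      case True
      then have s: "0 \<le> s" "s \<le> 1" by auto
      show ?thesis using True by (simp, intro continuous_intros T_cont[OF lam g s])
    qed (simp add: continuous_on_const)
  qed
  have "\<bar>LBINT s:{0..1}. v s * T_op S lam s g x y\<bar>
      \<le> (\<integral>s. \<bar>indicator {0..1} s *\<^sub>R (v s * T_op S lam s g x y)\<bar> \<partial>lborel)"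
    unfolding set_lebesgue_integral_def by (rule integral_abs_bound)
  also have "\<dots> \<le> (\<integral>s. indicator {0..1} s *\<^sub>R v s * B \<partial>lborel)"
    by (rule integral_mono[OF integrable_abs[OF int] iB bd])
  also have "\<dots> = B * (LBINT s:{0..1}. v s)"
    unfolding set_lebesgue_integral_def by (simp add: mult.commute)
  finally show "\<bar>LBINT s:{0..1}. v s * T_op S lam s g x y\<bar> \<le> B * (LBINT s:{0..1}. v s)" .
qed

lemma level0:
  fixes g :: "real^'n::finite \<Rightarrow> ('m \<Rightarrow> nat) \<Rightarrow> real"
  assumes g: "gb g B" and L: "\<And>x x' z. \<bar>g x z - g x' z\<bar> \<le> 1 * dist x x'"
  shows "set_integrable lborel {0..1} (\<lambda>s. 1 / (2 * (1 - s)) * (T_op S lam s g x y - T_op S lam s g x' y))"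
    and "\<bar>LBINT s:{0..1}. 1 / (2 * (1 - s)) * (T_op S lam s g x y - T_op S lam s g x' y)\<bar> \<le> dist x x'"
proof -
  let ?w = "\<lambda>s. 1 / (2 * (1 - s)) * sqrt (1 - s)"
  have iB: "integrable lborel (\<lambda>s. indicator {0..1} s *\<^sub>R ?w s * dist x x')"
    using w1(1) unfolding set_integrable_def by (rule integrable_mult_left)
  have m: "(\<lambda>s. indicator {0..1} s *\<^sub>R (1 / (2 * (1 - s)) * (T_op S lam s g x y - T_op S lam s g x' y))) \<in> borel_measurable lborel"
  proof -
    note [measurable] = T_meas[OF lam g, of S x y] T_meas[OF lam g, of S x' y]
    have e: "(\<lambda>s. indicator {0..1} s *\<^sub>R (1 / (2 * (1 - s)) * (T_op S lam s g x y - T_op S lam s g x' y)))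
        = (\<lambda>s. 1 / (2 * (1 - s)) * (indicator {0..1} s * T_op S lam s g x y - indicator {0..1} s * T_op S lam s g x' y))"
      by (auto simp: fun_eq_iff split: split_indicator)
    show ?thesis unfolding e by measurable
  qed
  have bd: "\<bar>indicator {0..1} s *\<^sub>R (1 / (2 * (1 - s)) * (T_op S lam s g x y - T_op S lam s g x' y))\<bar>
      \<le> indicator {0..1} s *\<^sub>R ?w s * dist x x'" for s
  proof (cases "s \<in> {0..1}")
    case True
    then have s: "0 \<le> s" "s \<le> 1" by auto
    have "\<bar>1 / (2 * (1 - s)) * (T_op S lam s g x y - T_op S lam s g x' y)\<bar>
        = 1 / (2 * (1 - s)) * \<bar>T_op S lam s g x y - T_op S lam s g x' y\<bar>"
      using s by (simp add: abs_mult)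
    also have "\<dots> \<le> 1 / (2 * (1 - s)) * (sqrt (1 - s) * 1 * dist x x')"
      by (rule mult_left_mono[OF T_lip[OF lam g s L]]) (use s in simp)
    finally show ?thesis using True by (simp add: mult_ac)
  qed simp
  have int: "integrable lborel (\<lambda>s. indicator {0..1} s *\<^sub>R (1 / (2 * (1 - s)) * (T_op S lam s g x y - T_op S lam s g x' y)))"
  proof (rule Bochner_Integration.integrable_bound[OF iB m], rule AE_I2)
    fix s
    show "norm (indicator {0..1} s *\<^sub>R (1 / (2 * (1 - s)) * (T_op S lam s g x y - T_op S lam s g x' y)))
        \<le> norm (indicator {0..1} s *\<^sub>R ?w s * dist x x')"
      unfolding real_norm_def by (rule order_trans[OF bd abs_ge_self])
  qed
  then show "set_integrable lborel {0..1} (\<lambda>s. 1 / (2 * (1 - s)) * (T_op S lam s g x y - T_op S lam s g x' y))"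
    unfolding set_integrable_def .
  have "\<bar>LBINT s:{0..1}. 1 / (2 * (1 - s)) * (T_op S lam s g x y - T_op S lam s g x' y)\<bar>
      \<le> (\<integral>s. \<bar>indicator {0..1} s *\<^sub>R (1 / (2 * (1 - s)) * (T_op S lam s g x y - T_op S lam s g x' y))\<bar> \<partial>lborel)"
    unfolding set_lebesgue_integral_def by (rule integral_abs_bound)
  also have "\<dots> \<le> (\<integral>s. indicator {0..1} s *\<^sub>R ?w s * dist x x' \<partial>lborel)"
    by (rule integral_mono[OF integrable_abs[OF int] iB bd])
  also have "\<dots> = (LBINT s:{0..1}. ?w s) * dist x x'"
    unfolding set_lebesgue_integral_def by (rule integral_mult_left_zero)
  also have "\<dots> = dist x x'" using w1(2) by simp
  finally show "\<bar>LBINT s:{0..1}. 1 / (2 * (1 - s)) * (T_op S lam s g x y - T_op S lam s g x' y)\<bar> \<le> dist x x'" .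
qed

end

lemma ereal_half: "(ereal a \<le> 1/2) \<longleftrightarrow> a \<le> 1/2" "(ereal a \<le> 1/3) \<longleftrightarrow> a \<le> 1/3"
proof -
  have "(1/2 :: ereal) = ereal (1/2)" "(1/3 :: ereal) = ereal (1/3)"
    by (simp_all add: one_ereal_def divide_ereal_def)
  then show "(ereal a \<le> 1/2) \<longleftrightarrow> a \<le> 1/2" "(ereal a \<le> 1/3) \<longleftrightarrow> a \<le> 1/3" by simp_all
qed

theorem lemma2p5:
  fixes Sigma :: "real^'n::finite^'n" and lam :: "'m::finite \<Rightarrow> real"
    and h :: "real^'n \<Rightarrow> ('m \<Rightarrow> nat) \<Rightarrow> real" and y :: "'m \<Rightarrow> nat"
  assumes "psd Sigma" and "\<forall>j. 0 < lam j" and "cls_H3 h"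
  shows "C3 (\<lambda>x. f_sol Sigma lam h x y)
      \<and> lip_const (\<lambda>x. f_sol Sigma lam h x y) \<le> 1
      \<and> snorm2 (\<lambda>x. f_sol Sigma lam h x y) \<le> 1/2
      \<and> snorm3 (\<lambda>x. f_sol Sigma lam h x y) \<le> 1/3
      \<and> ((\<forall>y'. \<exists>c. \<forall>x. h x y' = c) \<longrightarrow>
           lip_const (\<lambda>x. f_sol Sigma lam h x y) = 0
         \<and> snorm2 (\<lambda>x. f_sol Sigma lam h x y) = 0
         \<and> snorm3 (\<lambda>x. f_sol Sigma lam h x y) = 0)"
proof -
  note lam = assms(2)
  let ?f = "\<lambda>x. f_sol Sigma lam h x y"
  let ?E = "Eh Sigma lam h"
  let ?T = "\<lambda>s g x. T_op Sigma lam s g x y"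
  have hb: "\<And>x z. \<bar>h x z\<bar> \<le> 1" and hC: "\<And>z. cls_C3 (\<lambda>x. h x z)"
    using assms(3) by (auto simp: cls_H3_def)
  have C3h: "\<And>z. C3 (\<lambda>x. h x z)" and liph: "\<And>z. lip_const (\<lambda>x. h x z) \<le> 1"
    and s2h: "\<And>z. snorm2 (\<lambda>x. h x z) \<le> 1" and s3h: "\<And>z. snorm3 (\<lambda>x. h x z) \<le> 1"
    using hC by (auto simp: cls_C3_def)
  define g1 where "g1 j = (\<lambda>x z. pd j (\<lambda>x. h x z) x)" for j
  define g2 where "g2 j k = (\<lambda>x z. pd k (pd j (\<lambda>x. h x z)) x)" for j k
  define g3 where "g3 j k l = (\<lambda>x z. pd l (pd k (pd j (\<lambda>x. h x z))) x)" for j k l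
  have gh: "gb h 1" unfolding gb_def using C3h hb by (auto simp: C3_def)
  have hp0: "has_pd j (\<lambda>x. h x z)" for j z using C3h[of z] by (simp add: C3_def)
  have Lh: "\<bar>h x z - h x' z\<bar> \<le> 1 * dist x x'" for x x' z by (rule lip_const_le1[OF liph])
  have gg1: "gb (g1 j) 1" for j
    unfolding gb_def g1_def using C3h
    by (auto simp: C3_def intro!: pd_lip_bound[OF hp0 lip_const_le1[OF liph]])
  have hp1: "has_pd k (\<lambda>x. g1 j x z)" for j k z using C3h[of z] by (simp add: C3_def g1_def)
  have e1: "(\<lambda>x z. pd k (\<lambda>x. g1 j x z) x) = g2 j k" for j k by (simp add: g1_def g2_def)
  have gg2: "gb (g2 j k) 1" for j k
    unfolding gb_def g2_def using C3h snorm2_le[OF s2h] by (auto simp: C3_def)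
  have hp2: "has_pd l (\<lambda>x. g2 j k x z)" for j k l z using C3h[of z] by (simp add: C3_def g2_def)
  have e2: "(\<lambda>x z. pd l (\<lambda>x. g2 j k x z) x) = g3 j k l" for j k l by (simp add: g2_def g3_def)
  have gg3: "gb (g3 j k l) 1" for j k l
    unfolding gb_def g3_def using C3h snorm3_le[OF s3h] by (auto simp: C3_def)
  have e0: "(\<lambda>x z. pd j (\<lambda>x. h x z) x) = g1 j" for j by (simp add: g1_def)

  have part1: "C3 ?f \<and> lip_const ?f \<le> 1 \<and> snorm2 ?f \<le> 1/2 \<and> snorm3 ?f \<le> 1/3"
  proof (cases "set_integrable lborel {0..1} (\<lambda>s. 1 / (2 * (1 - s)) * (?T s h 0 - ?E))")
    case CI: True
    have ix0: "set_integrable lborel {0..1} (\<lambda>s. 1 / (2 * (1 - s)) * (?T s h x - ?E))" for x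
    proof -
      have "set_integrable lborel {0..1} (\<lambda>s. 1 / (2 * (1 - s)) * (?T s h x - ?T s h 0) + 1 / (2 * (1 - s)) * (?T s h 0 - ?E))"
        by (rule set_integral_add(1)[OF level0(1)[OF lam gh Lh] CI])
      moreover have "(\<lambda>s. 1 / (2 * (1 - s)) * (?T s h x - ?T s h 0) + 1 / (2 * (1 - s)) * (?T s h 0 - ?E))
          = (\<lambda>s. 1 / (2 * (1 - s)) * (?T s h x - ?E))"
        by (simp add: fun_eq_iff algebra_simps)
      ultimately show ?thesis by simp
    qed
    define F1 where "F1 j x = (LBINT s:{0..1}. 1 / (2 * (1 - s)) * sqrt (1 - s) * ?T s (g1 j) x)" for j x
    define F2 where "F2 j k x = (LBINT s:{0..1}. 1 / (2 * (1 - s)) * sqrt (1 - s) * sqrt (1 - s) * ?T s (g2 j k) x)" for j k x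
    define F3 where "F3 j k l x = (LBINT s:{0..1}. 1 / (2 * (1 - s)) * sqrt (1 - s) * sqrt (1 - s) * sqrt (1 - s) * ?T s (g3 j k l) x)" for j k l x
    have fx: "?f x = - (LBINT s:{0..1}. 1 / (2 * (1 - s)) * (?T s h x - ?E))" for x
      by (simp add: f_sol_def)
    have D1: "((\<lambda>t. ?f (x + t *\<^sub>R axis j 1)) has_real_derivative - F1 j x) (at 0)" for x j
    proof -
      have "((\<lambda>t. LBINT s:{0..1}. 1 / (2 * (1 - s)) * (?T s h (x + t *\<^sub>R axis j 1) - ?E)) has_real_derivative
          (LBINT s:{0..1}. 1 / (2 * (1 - s)) * sqrt (1 - s) * T_op Sigma lam s (\<lambda>x z. pd j (\<lambda>x. h x z) x) x y)) (at 0)"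
        by (rule level_deriv[OF lam gh hp0 gg1[of j, folded e0] _ _ _ w1(1) ix0]) auto
      then show ?thesis unfolding fx F1_def e0 by (rule DERIV_minus)
    qed
    have pd1: "has_pd j ?f" "pd j ?f = (\<lambda>x. - F1 j x)" for j
      using has_pd_from_DERIV[OF D1] by auto
    have i1: "set_integrable lborel {0..1} (\<lambda>s. 1 / (2 * (1 - s)) * sqrt (1 - s) * ?T s (g1 j) x)" for j x
      by (rule level_cont(1)[OF lam gg1 _ _ w1(1)]) auto
    have D2: "((\<lambda>t. - F1 j (x + t *\<^sub>R axis k 1)) has_real_derivative - F2 j k x) (at 0)" for x j k
    proof -
      have "((\<lambda>t. F1 j (x + t *\<^sub>R axis k 1)) has_real_derivative F2 j k x) (at 0)"
        unfolding F1_def F2_def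
        by (rule level_deriv0[OF lam gg1 hp1 gg2[of j k, folded e1] _ _ w2(1) i1, unfolded e1]) auto
      then show ?thesis by (rule DERIV_minus)
    qed
    have pd2: "has_pd k (pd j ?f)" "pd k (pd j ?f) = (\<lambda>x. - F2 j k x)" for j k
      unfolding pd1 using has_pd_from_DERIV[OF D2] by auto
    have i2: "set_integrable lborel {0..1} (\<lambda>s. 1 / (2 * (1 - s)) * sqrt (1 - s) * sqrt (1 - s) * ?T s (g2 j k) x)" for j k x
      by (rule level_cont(1)[OF lam gg2 _ _ w2(1)]) auto
    have D3: "((\<lambda>t. - F2 j k (x + t *\<^sub>R axis l 1)) has_real_derivative - F3 j k l x) (at 0)" for x j k l
    proof -
      have "((\<lambda>t. F2 j k (x + t *\<^sub>R axis l 1)) has_real_derivative F3 j k l x) (at 0)"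
        unfolding F2_def F3_def
        by (rule level_deriv0[OF lam gg2 hp2 gg3[of j k l, folded e2] _ _ w3(1) i2, unfolded e2]) auto
      then show ?thesis by (rule DERIV_minus)
    qed
    have pd3: "has_pd l (pd k (pd j ?f))" "pd l (pd k (pd j ?f)) = (\<lambda>x. - F3 j k l x)" for j k l
      unfolding pd2 using has_pd_from_DERIV[OF D3] by auto
    have c1: "continuous_on UNIV (\<lambda>x. - F1 j x)" for j
      unfolding F1_def by (intro continuous_intros level_cont(2)[OF lam gg1 _ _ w1(1)]) auto
    have c2: "continuous_on UNIV (\<lambda>x. - F2 j k x)" for j k
      unfolding F2_def by (intro continuous_intros level_cont(2)[OF lam gg2 _ _ w2(1)]) auto
    have c3: "continuous_on UNIV (\<lambda>x. - F3 j k l x)" for j k l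
      unfolding F3_def by (intro continuous_intros level_cont(2)[OF lam gg3 _ _ w3(1)]) auto
    have b2: "\<bar>- F2 j k x\<bar> \<le> 1/2" for j k x
    proof -
      have "\<bar>F2 j k x\<bar> \<le> 1 * (LBINT s:{0..1}. 1 / (2 * (1 - s)) * sqrt (1 - s) * sqrt (1 - s))"
        unfolding F2_def by (rule level_cont(3)[OF lam gg2 _ _ w2(1)]) auto
      then show ?thesis unfolding w2(2) by simp
    qed
    have b3: "\<bar>- F3 j k l x\<bar> \<le> 1/3" for j k l x
    proof -
      have "\<bar>F3 j k l x\<bar> \<le> 1 * (LBINT s:{0..1}. 1 / (2 * (1 - s)) * sqrt (1 - s) * sqrt (1 - s) * sqrt (1 - s))"
        unfolding F3_def by (rule level_cont(3)[OF lam gg3 _ _ w3(1)]) auto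
      then show ?thesis unfolding w3(2) by simp
    qed
    have lipf: "\<bar>?f x - ?f x'\<bar> \<le> dist x x'" for x x'
    proof -
      have "?f x - ?f x' = - ((LBINT s:{0..1}. 1 / (2 * (1 - s)) * (?T s h x - ?E))
          - (LBINT s:{0..1}. 1 / (2 * (1 - s)) * (?T s h x' - ?E)))"
        unfolding fx by simp
      also have "(LBINT s:{0..1}. 1 / (2 * (1 - s)) * (?T s h x - ?E))
          - (LBINT s:{0..1}. 1 / (2 * (1 - s)) * (?T s h x' - ?E))
          = (LBINT s:{0..1}. 1 / (2 * (1 - s)) * (?T s h x - ?E) - 1 / (2 * (1 - s)) * (?T s h x' - ?E))"
        by (rule set_integral_diff(2)[OF ix0 ix0, symmetric])
      also have "\<dots> = (LBINT s:{0..1}. 1 / (2 * (1 - s)) * (?T s h x - ?T s h x'))"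
        by (simp add: algebra_simps)
      finally have "\<bar>?f x - ?f x'\<bar> = \<bar>LBINT s:{0..1}. 1 / (2 * (1 - s)) * (?T s h x - ?T s h x')\<bar>"
        by simp
      also have "\<dots> \<le> dist x x'" by (rule level0(2)[OF lam gh Lh])
      finally show ?thesis .
    qed
    have cf: "continuous_on UNIV ?f"
      by (rule lipschitz_on_continuous_on[of 1], rule lipschitz_onI) (use lipf in \<open>auto simp: dist_real_def\<close>)
    have "C3 ?f"
      unfolding C3_def using cf pd1 pd2 pd3 c1 c2 c3 by auto
    moreover have "lip_const ?f \<le> 1"
      unfolding lip_const_def
    proof (rule SUP_least, clarify)
      fix x x' :: "real^'n" assume "x \<noteq> x'"
      then have "dist x x' > 0" by simp
      then have "\<bar>?f x - ?f x'\<bar> / dist x x' \<le> 1" using lipf[of x x'] by (simp add: divide_le_eq)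
      then show "ereal (\<bar>?f x - ?f x'\<bar> / dist x x') \<le> 1" by simp
    qed
    moreover have "snorm2 ?f \<le> 1/2"
      unfolding snorm2_def
    proof (rule SUP_least, clarify)
      fix x j k
      show "ereal \<bar>pd k (pd j ?f) x\<bar> \<le> 1/2" unfolding pd2 ereal_half using b2 by simp
    qed
    moreover have "snorm3 ?f \<le> 1/3"
      unfolding snorm3_def
    proof (rule SUP_least, clarify)
      fix x j k l
      show "ereal \<bar>pd l (pd k (pd j ?f)) x\<bar> \<le> 1/3" unfolding pd3 ereal_half using b3 by simp
    qed
    ultimately show ?thesis by blast
  next
    case NCI: False
    have "\<not> set_integrable lborel {0..1} (\<lambda>s. 1 / (2 * (1 - s)) * (?T s h x - ?E))" for x
    proof
      assume a: "set_integrable lborel {0..1} (\<lambda>s. 1 / (2 * (1 - s)) * (?T s h x - ?E))"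
      have "set_integrable lborel {0..1} (\<lambda>s. 1 / (2 * (1 - s)) * (?T s h x - ?E) - 1 / (2 * (1 - s)) * (?T s h x - ?T s h 0))"
        by (rule set_integral_diff(1)[OF a level0(1)[OF lam gh Lh]])
      moreover have "(\<lambda>s. 1 / (2 * (1 - s)) * (?T s h x - ?E) - 1 / (2 * (1 - s)) * (?T s h x - ?T s h 0))
          = (\<lambda>s. 1 / (2 * (1 - s)) * (?T s h 0 - ?E))"
        by (simp add: fun_eq_iff algebra_simps)
      ultimately show False using NCI by simp
    qed
    then have "?f x = 0" for x
      unfolding f_sol_def set_lebesgue_integral_def set_integrable_def
      by (simp add: not_integrable_integral_eq)
    then have "C3 ?f" "lip_const ?f = 0" "snorm2 ?f = 0" "snorm3 ?f = 0"
      using const_fun_props[of ?f 0] by auto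
    moreover have "(0::ereal) \<le> 1/2" "(0::ereal) \<le> 1/3"
      unfolding zero_ereal_def ereal_half by simp_all
    ultimately show ?thesis by simp
  qed
  have part2: "(\<forall>y'. \<exists>c. \<forall>x. h x y' = c) \<longrightarrow>
      lip_const ?f = 0 \<and> snorm2 ?f = 0 \<and> snorm3 ?f = 0"
  proof
    assume "\<forall>y'. \<exists>c. \<forall>x. h x y' = c"
    then obtain c where hc: "\<And>x y'. h x y' = c y'" by metis
    have "?f x = ?f 0" for x
      by (simp add: f_sol_def T_op_def S_op_def hc)
    then show "lip_const ?f = 0 \<and> snorm2 ?f = 0 \<and> snorm3 ?f = 0"
      using const_fun_props[of ?f "?f 0"] by auto
  qed
  show ?thesis using part1 part2 by blast
qed

end
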